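(* Consider $n$ birds in $\mathbb{R}^d$ evolving noise-free by $x(t)=x(t-1)+v(t)$, $v(t+1)=(P\otimes I_d)v(t)$, with fixed connected flocking network $G$ and fixed $P=I_n-CL$, where the coordinates of $x(0)$ and $v(1)$ are rationals over $\mathfrak{p}$ bits. Let $\pi=(\mathrm{tr}\,C^{-1})^{-1}C^{-1}\mathbf{1}$, $\Gamma=\lim_{t\to\infty}\bigl(-\mathbf{1}\pi^Tt+\sum_{s=0}^{t-1}P^s\bigr)$ and $x^r=((I_n-\mathbf{1}\pi^T)\otimes I_d)x(0)+(\Gamma\otimes I_d)v(1)$. Then the elements of $\Gamma$ are CD-rationals over $O(n\log n)$ bits and the coordinates of $x^r$ are CD-rationals over $O(n\log n+\mathfrak{p}n)$ bits.
   Context: $G$ is a connected undirected graph without self-loops on $n$ vertices with degrees $d_i$ and Laplacian $L$; $C=\mathrm{diag}(c_1,\dots,c_n)$ with positive rationals $c_i$ of $O(\log n)$ bits and $c_id_i<1$. A set of numbers is CD-rational over $k$ bits if they can be written as $p_i/q$ with a common denominator $q$, all integers involved having $O(k)$ bits. *)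

theory Defs
  imports Complex_Main "Jordan_Normal_Form.Matrix"
begin

definition fits_bits :: "int \<Rightarrow> real \<Rightarrow> bool" where
  "fits_bits z b \<longleftrightarrow> real_of_int \<bar>z\<bar> < 2 powr b"

definition rat_over_bits :: "real \<Rightarrow> real \<Rightarrow> bool" where
  "rat_over_bits x b \<longleftrightarrow> (\<exists>a q::int. q > 0 \<and> fits_bits a b \<and> fits_bits q b \<and> x = of_int a / of_int q)"

text \<open>A set of numbers is CD-rational over b bits: common positive denominator q,
  all integers involved with at most b bits (the O(.) is absorbed into b by the statement).\<close>
definition cd_rational_bits :: "real set \<Rightarrow> real \<Rightarrow> bool" where
  "cd_rational_bits S b \<longleftrightarrow> (\<exists>q::int. q > 0 \<and> fits_bits q b \<and>
      (\<forall>x\<in>S. \<exists>a::int. fits_bits a b \<and> x = of_int a / of_int q))"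

definition undirected_graph :: "nat \<Rightarrow> (nat \<Rightarrow> nat \<Rightarrow> bool) \<Rightarrow> bool" where
  "undirected_graph n E \<longleftrightarrow> (\<forall>i j. E i j \<longrightarrow> E j i) \<and> (\<forall>i. \<not> E i i)"

definition graph_connected :: "nat \<Rightarrow> (nat \<Rightarrow> nat \<Rightarrow> bool) \<Rightarrow> bool" where
  "graph_connected n E \<longleftrightarrow>
     (\<forall>i<n. \<forall>j<n. (\<lambda>a b. a < n \<and> b < n \<and> E a b)\<^sup>*\<^sup>* i j)"

definition degree :: "nat \<Rightarrow> (nat \<Rightarrow> nat \<Rightarrow> bool) \<Rightarrow> nat \<Rightarrow> nat" where
  "degree n E i = card {j. j < n \<and> E i j}"

definition laplacian :: "nat \<Rightarrow> (nat \<Rightarrow> nat \<Rightarrow> bool) \<Rightarrow> real mat" where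
  "laplacian n E = mat n n (\<lambda>(i,j). if i = j then real (degree n E i)
                                    else if E i j then -1 else 0)"

definition diag_mat :: "nat \<Rightarrow> (nat \<Rightarrow> real) \<Rightarrow> real mat" where
  "diag_mat n c = mat n n (\<lambda>(i,j). if i = j then c i else 0)"

definition trans_mat :: "nat \<Rightarrow> (nat \<Rightarrow> nat \<Rightarrow> bool) \<Rightarrow> (nat \<Rightarrow> real) \<Rightarrow> real mat" where
  "trans_mat n E c = 1\<^sub>m n - diag_mat n c * laplacian n E"

definition stat_dist :: "nat \<Rightarrow> (nat \<Rightarrow> real) \<Rightarrow> nat \<Rightarrow> real" where
  "stat_dist n c j = (1 / c j) / (\<Sum>k<n. 1 / c k)"

definition gamma_seq :: "nat \<Rightarrow> (nat \<Rightarrow> nat \<Rightarrow> bool) \<Rightarrow> (nat \<Rightarrow> real) \<Rightarrow> nat \<Rightarrow> nat \<Rightarrow> nat \<Rightarrow> real" where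
  "gamma_seq n E c i j t = - stat_dist n c j * real t
      + (\<Sum>s<t. (trans_mat n E c ^\<^sub>m s) $$ (i,j))"

text \<open>Coordinate (i,k) of x^r = ((I_n - 1 pi^T) \<otimes> I_d) x(0) + (Gamma \<otimes> I_d) v(1), written out.\<close>
definition x_rest :: "nat \<Rightarrow> (nat \<Rightarrow> real) \<Rightarrow> (nat \<Rightarrow> nat \<Rightarrow> real) \<Rightarrow> (nat \<Rightarrow> nat \<Rightarrow> real)
    \<Rightarrow> (nat \<Rightarrow> nat \<Rightarrow> real) \<Rightarrow> nat \<Rightarrow> nat \<Rightarrow> real" where
  "x_rest n c \<Gamma> x0 v1 i k =
     (\<Sum>j<n. ((if i = j then 1 else 0) - stat_dist n c j) * x0 j k)
   + (\<Sum>j<n. \<Gamma> i j * v1 j k)"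

end

theory Submission imports Defs "Jordan_Normal_Form.Determinant" begin

hide_const (open) Polynomial.degree


lemma CS_card:
  fixes f :: "'a \<Rightarrow> real"
  assumes "finite S"
  shows "(\<Sum>j\<in>S. f j)^2 \<le> real (card S) * (\<Sum>j\<in>S. (f j)^2)"
proof -
  have "0 \<le> (\<Sum>i\<in>S. \<Sum>j\<in>S. (f i - f j)^2)" by (intro sum_nonneg) auto
  also have "\<dots> = (\<Sum>i\<in>S. \<Sum>j\<in>S. (f i)^2) + (\<Sum>i\<in>S. \<Sum>j\<in>S. (f j)^2) - 2 * (\<Sum>i\<in>S. \<Sum>j\<in>S. f i * f j)"
    by (simp add: power2_diff sum.distrib sum_subtractf sum_distrib_left mult.assoc)
  also have "(\<Sum>i\<in>S. \<Sum>j\<in>S. f i * f j) = (\<Sum>j\<in>S. f j)^2"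
    by (simp add: power2_eq_square sum_product)
  also have "(\<Sum>i\<in>S. \<Sum>j\<in>S. (f i)^2) = real (card S) * (\<Sum>j\<in>S. (f j)^2)"
    by (simp add: sum_distrib_left)
  also have "(\<Sum>i\<in>S. \<Sum>j\<in>S. (f j)^2) = real (card S) * (\<Sum>j\<in>S. (f j)^2)"
    by simp
  finally show ?thesis by simp
qed

lemma mat_mult_entry:
  assumes "A \<in> carrier_mat n n" "B \<in> carrier_mat n n" "i < n" "j < n"
  shows "(A * B) $$ (i,j) = (\<Sum>k<n. A $$ (i,k) * B $$ (k,j))"
  using assms by (simp add: scalar_prod_def atLeast0LessThan)

lemma mat_vec_entry:
  assumes "A \<in> carrier_mat n n" "v \<in> carrier_vec n" "i < n"
  shows "(A *\<^sub>v v) $ i = (\<Sum>k<n. A $$ (i,k) * v $ k)"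
  using assms by (simp add: scalar_prod_def atLeast0LessThan)

lemma pow_mat_Suc_left:
  assumes "A \<in> carrier_mat n n"
  shows "A ^\<^sub>m Suc t = A * A ^\<^sub>m t"
proof (induction t)
  case 0 then show ?case using assms by simp
next
  case (Suc t)
  have "A ^\<^sub>m Suc (Suc t) = (A * A ^\<^sub>m t) * A" using Suc by simp
  also have "\<dots> = A * (A ^\<^sub>m t * A)" using assms by (intro assoc_mult_mat) auto
  finally show ?case by simp
qed

locale flock =
  fixes n :: nat and E :: "nat \<Rightarrow> nat \<Rightarrow> bool" and c :: "nat \<Rightarrow> real"
  assumes und: "undirected_graph n E" and conn: "graph_connected n E"
    and cpos: "\<And>i. i < n \<Longrightarrow> c i > 0"
    and cdeg: "\<And>i. i < n \<Longrightarrow> c i * real (degree n E i) < 1"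
begin

definition Nb where "Nb i = {j. j < n \<and> E i j}"
definition Lf :: "(nat \<Rightarrow> real) \<Rightarrow> nat \<Rightarrow> real" where
  "Lf y i = (\<Sum>j\<in>Nb i. y i - y j)"
definition V :: "(nat \<Rightarrow> real) \<Rightarrow> real" where "V y = (\<Sum>i<n. (y i)^2 / c i)"
definition W :: "(nat \<Rightarrow> real) \<Rightarrow> real" where "W y = (\<Sum>i<n. y i / c i)"

lemma symE: "E i j \<Longrightarrow> E j i" using und unfolding undirected_graph_def by blast
lemma irrE: "\<not> E i i" using und unfolding undirected_graph_def by blast

lemma Nb_fin[simp]: "finite (Nb i)" unfolding Nb_def by auto
lemma Nb_card: "card (Nb i) = degree n E i" by (simp add: Nb_def Defs.degree_def)

lemma Nb_eq: "Nb i = {j \<in> {..<n}. E i j}" unfolding Nb_def by auto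

lemma sum_Nb: "(\<Sum>j\<in>Nb i. f j) = (\<Sum>j<n. if E i j then f j else 0)"
  unfolding Nb_eq by (rule sum.inter_filter) simp

lemma Lf_alt: "Lf y i = (\<Sum>j<n. if E i j then y i - y j else 0)"
  unfolding Lf_def sum_Nb ..

lemma sum_Lf: "(\<Sum>i<n. Lf y i) = 0"
proof -
  let ?e = "\<lambda>i j. if E i j then y i - y j else (0::real)"
  have "(\<Sum>i<n. \<Sum>j<n. ?e i j) = (\<Sum>j<n. \<Sum>i<n. ?e i j)" by (rule sum.swap)
  also have "\<dots> = (\<Sum>j<n. \<Sum>i<n. - ?e j i)"
    by (intro sum.cong refl) (auto intro: symE)
  also have "\<dots> = - (\<Sum>j<n. \<Sum>i<n. ?e j i)" by (simp add: sum_negf)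
  finally show ?thesis unfolding Lf_alt by simp
qed

lemma quad: "(\<Sum>i<n. y i * Lf y i) = (\<Sum>i<n. \<Sum>j\<in>Nb i. (y i - y j)^2) / 2"
proof -
  let ?f = "\<lambda>i j. if E i j then y i * (y i - y j) else (0::real)"
  let ?g = "\<lambda>i j. if E i j then (y i - y j)^2 else (0::real)"
  have A: "(\<Sum>i<n. y i * Lf y i) = (\<Sum>i<n. \<Sum>j<n. ?f i j)"
    unfolding Lf_alt by (simp add: sum_distrib_left if_distrib cong: if_cong)
  have B: "(\<Sum>i<n. \<Sum>j<n. ?f i j) = (\<Sum>i<n. \<Sum>j<n. ?f j i)"
    using sum.swap[of ?f "{..<n}" "{..<n}"] by simp
  have "(\<Sum>i<n. \<Sum>j<n. ?f i j) + (\<Sum>i<n. \<Sum>j<n. ?f j i) = (\<Sum>i<n. \<Sum>j<n. ?g i j)"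
    unfolding sum.distrib[symmetric]
    by (intro sum.cong refl) (auto intro: symE simp: power2_eq_square algebra_simps)
  then show ?thesis using A B unfolding sum_Nb by simp
qed

lemma Lf_sq: "(Lf y i)^2 \<le> real (degree n E i) * (\<Sum>j\<in>Nb i. (y i - y j)^2)"
  unfolding Lf_def Nb_card[symmetric] by (rule CS_card) simp

lemma sq_expand: "(cc::real) \<noteq> 0 \<Longrightarrow> (a - cc * l)^2 / cc = a^2 / cc - 2 * (a * l) + cc * l^2"
  by (simp add: field_simps power2_eq_square)

lemma step_decrease:
  assumes "\<And>i. i < n \<Longrightarrow> y' i = y i - c i * Lf y i"
  shows "V y - V y' \<ge> (\<Sum>i<n. (1 - c i * real (degree n E i)) * (\<Sum>j\<in>Nb i. (y i - y j)^2))"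
proof -
  have "V y' = (\<Sum>i<n. (y i)^2 / c i - 2 * (y i * Lf y i) + c i * (Lf y i)^2)"
    unfolding V_def using assms cpos sq_expand
    by (intro sum.cong refl) (simp add: less_imp_neq[symmetric])
  hence "V y - V y' = (\<Sum>i<n. \<Sum>j\<in>Nb i. (y i - y j)^2) - (\<Sum>i<n. c i * (Lf y i)^2)"
    unfolding V_def using quad[of y]
    by (simp add: sum.distrib sum_subtractf sum_distrib_left[symmetric])
  moreover have "(\<Sum>i<n. c i * (Lf y i)^2) \<le> (\<Sum>i<n. c i * real (degree n E i) * (\<Sum>j\<in>Nb i. (y i - y j)^2))"
    using Lf_sq cpos by (intro sum_mono) (simp add: mult.assoc mult_left_mono less_imp_le)
  ultimately show ?thesis by (simp add: algebra_simps sum_subtractf)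
qed

lemma edge_decrease:
  assumes "\<And>i. i < n \<Longrightarrow> y' i = y i - c i * Lf y i" and "a < n" "b < n" "E a b"
  shows "(1 - c a * real (degree n E a)) * (y a - y b)^2 \<le> V y - V y'"
proof -
  let ?h = "\<lambda>i. (1 - c i * real (degree n E i)) * (\<Sum>j\<in>Nb i. (y i - y j)^2)"
  have nn: "\<And>i. i < n \<Longrightarrow> 0 \<le> ?h i" using cdeg by (intro mult_nonneg_nonneg sum_nonneg) (auto simp: less_imp_le)
  have "b \<in> Nb a" using assms unfolding Nb_def by auto
  hence "(y a - y b)^2 \<le> (\<Sum>j\<in>Nb a. (y a - y j)^2)"
    by (intro member_le_sum) auto
  hence "(1 - c a * real (degree n E a)) * (y a - y b)^2 \<le> ?h a"
    using cdeg[OF \<open>a<n\<close>] by (intro mult_left_mono) auto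
  also have "?h a \<le> (\<Sum>i<n. ?h i)" using nn \<open>a<n\<close> by (intro member_le_sum) auto
  also have "\<dots> \<le> V y - V y'" by (rule step_decrease[OF assms(1)])
  finally show ?thesis .
qed

lemma W_step:
  assumes "\<And>i. i < n \<Longrightarrow> y' i = y i - c i * Lf y i"
  shows "W y' = W y"
proof -
  have "W y' = (\<Sum>i<n. y i / c i - Lf y i)" unfolding W_def
  proof (intro sum.cong refl)
    fix i assume "i \<in> {..<n}"
    thus "y' i / c i = y i / c i - Lf y i" using assms[of i] cpos[of i] by (simp add: field_simps)
  qed
  thus ?thesis unfolding W_def by (simp add: sum_subtractf sum_Lf)
qed

lemma V_nonneg: "(\<And>i. i < n \<Longrightarrow> 0 < c i) \<Longrightarrow> V y \<ge> 0" unfolding V_def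
  by (intro sum_nonneg) (auto simp: less_imp_le)

definition SW where "SW = (\<Sum>k<n. 1 / c k)"
definition pi :: "nat \<Rightarrow> real" where "pi j = (1 / c j) / SW"

lemma n_pos_SW: "n > 0 \<Longrightarrow> SW > 0"
  unfolding SW_def using cpos by (intro sum_pos) auto

lemma sum_pi: "n > 0 \<Longrightarrow> (\<Sum>j<n. pi j) = 1"
proof -
  assume "n > 0"
  have "(\<Sum>j<n. (1 / c j) / SW) = (\<Sum>j<n. 1 / c j) / SW" by (rule sum_divide_distrib[symmetric])
  also have "\<dots> = 1" using n_pos_SW[OF \<open>n>0\<close>] unfolding SW_def by simp
  finally show ?thesis unfolding pi_def .
qed

lemma pi_stat: "pi = stat_dist n c" unfolding pi_def SW_def stat_dist_def by (rule ext) simp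

lemma conv:
  fixes z :: "nat \<Rightarrow> nat \<Rightarrow> real"
  assumes rec: "\<And>t i. i < n \<Longrightarrow> z (Suc t) i = z t i - c i * Lf (z t) i"
    and W0: "W (z 0) = 0" and i: "i < n"
  shows "(\<lambda>t. z t i) \<longlonglongrightarrow> 0"
proof -
  have Wt: "W (z t) = 0" for t
  proof (induction t)
    case 0 show ?case using W0 .
  next
    case (Suc t)
    have "W (z (Suc t)) = W (z t)" by (rule W_step) (rule rec)
    with Suc show ?case by simp
  qed
  have dec: "decseq (\<lambda>t. V (z t))"
  proof (rule decseq_SucI)
    fix t
    have nn: "0 \<le> 1 - c i * real (degree n E i)" if "i \<in> {..<n}" for i using cdeg[of i] that by simp
    have "0 \<le> (\<Sum>i<n. (1 - c i * real (degree n E i)) * (\<Sum>j\<in>Nb i. (z t i - z t j)^2))"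
      by (intro sum_nonneg mult_nonneg_nonneg nn zero_le_power2)
    with step_decrease[OF rec, of t] show "V (z (Suc t)) \<le> V (z t)" by simp
  qed
  obtain LV where LV: "(\<lambda>t. V (z t)) \<longlonglongrightarrow> LV"
  proof -
    have "\<forall>t. 0 \<le> V (z t)" by (intro allI V_nonneg cpos)
    from decseq_convergent[OF dec this] show ?thesis using that by blast
  qed
  have D: "(\<lambda>t. V (z t) - V (z (Suc t))) \<longlonglongrightarrow> 0"
    using tendsto_diff[OF LV LIMSEQ_Suc[OF LV]] by simp
  have edge: "(\<lambda>t. z t a - z t b) \<longlonglongrightarrow> 0" if ab: "a < n" "b < n" "E a b" for a b
  proof -
    define \<kappa> where "\<kappa> = 1 - c a * real (degree n E a)"
    have kp: "\<kappa> > 0" using cdeg[OF \<open>a<n\<close>] unfolding \<kappa>_def by simp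
    have le: "(z t a - z t b)^2 \<le> (V (z t) - V (z (Suc t))) / \<kappa>" for t
      using edge_decrease[OF rec ab, of t] kp unfolding \<kappa>_def[symmetric]
      by (simp add: pos_le_divide_eq mult.commute)
    have "(\<lambda>t. (V (z t) - V (z (Suc t))) / \<kappa>) \<longlonglongrightarrow> 0"
      using tendsto_divide[OF D tendsto_const[of \<kappa>]] kp by simp
    hence sq: "(\<lambda>t. (z t a - z t b)^2) \<longlonglongrightarrow> 0"
      by (rule tendsto_sandwich[rotated 2, OF tendsto_const])
         (use le in \<open>auto intro: always_eventually\<close>)
    have "(\<lambda>t. sqrt ((z t a - z t b)^2)) \<longlonglongrightarrow> sqrt 0"
      by (rule tendsto_real_sqrt[OF sq])
    hence "(\<lambda>t. \<bar>z t a - z t b\<bar>) \<longlonglongrightarrow> 0" by simp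
    thus ?thesis by (simp add: tendsto_rabs_zero_iff)
  qed
  let ?R = "\<lambda>a b. a < n \<and> b < n \<and> E a b"
  have path: "?R\<^sup>*\<^sup>* a b \<Longrightarrow> (\<lambda>t. z t a - z t b) \<longlonglongrightarrow> 0" for a b
  proof (induction rule: rtranclp_induct)
    case base then show ?case by simp
  next
    case (step b' b'')
    have "(\<lambda>t. (z t a - z t b') + (z t b' - z t b'')) \<longlonglongrightarrow> 0 + 0"
      using step edge by (intro tendsto_add) auto
    thus ?case by simp
  qed
  have npos: "n > 0" using i by simp
  have eq: "z t i = (\<Sum>j<n. pi j * (z t i - z t j))" for t
  proof -
    have "(\<Sum>j<n. pi j * z t j) = W (z t) / SW"
      unfolding W_def pi_def sum_divide_distrib by (intro sum.cong refl) simp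
    hence z0: "(\<Sum>j<n. pi j * z t j) = 0" using Wt by simp
    have "(\<Sum>j<n. pi j * (z t i - z t j)) = (\<Sum>j<n. pi j * z t i) - (\<Sum>j<n. pi j * z t j)"
      by (simp add: right_diff_distrib sum_subtractf)
    also have "(\<Sum>j<n. pi j * z t i) = (\<Sum>j<n. pi j) * z t i" by (rule sum_distrib_right[symmetric])
    finally show ?thesis using z0 sum_pi[OF npos] by simp
  qed
  have "(\<lambda>t. \<Sum>j<n. pi j * (z t i - z t j)) \<longlonglongrightarrow> (\<Sum>j<n. pi j * 0)"
    using conn i unfolding graph_connected_def
    by (intro tendsto_sum tendsto_mult tendsto_const path) auto
  thus ?thesis using eq by simp
qed

lemma W_iter:
  fixes z :: "nat \<Rightarrow> nat \<Rightarrow> real"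
  assumes rec: "\<And>t i. i < n \<Longrightarrow> z (Suc t) i = z t i - c i * Lf (z t) i"
    and W0: "W (z 0) = 0"
  shows "W (z t) = 0"
proof (induction t)
  case 0 show ?case using W0 .
next
  case (Suc t)
  have "W (z (Suc t)) = W (z t)" by (rule W_step) (rule rec)
  with Suc show ?case by simp
qed

abbreviation "Lap \<equiv> laplacian n E"
abbreviation "P \<equiv> trans_mat n E c"

lemma Lap_carrier: "Lap \<in> carrier_mat n n" unfolding laplacian_def by simp
lemma P_carrier: "P \<in> carrier_mat n n" unfolding trans_mat_def diag_mat_def laplacian_def carrier_mat_def by simp

lemma Lap_entry: "i < n \<Longrightarrow> k < n \<Longrightarrow>
   Lap $$ (i,k) = (if i = k then real (degree n E i) else 0) - (if E i k then 1 else 0)"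
  unfolding laplacian_def using irrE by auto

lemma P_entry: assumes "i < n" "k < n"
  shows "P $$ (i,k) = (if i = k then 1 else 0) - c i * Lap $$ (i,k)"
proof -
  have "(diag_mat n c * Lap) $$ (i,k) = (\<Sum>l<n. (if i = l then c i else 0) * Lap $$ (l,k))"
    using assms by (subst mat_mult_entry[of _ n]) (auto simp: diag_mat_def Lap_carrier intro!: sum.cong)
  also have "\<dots> = (\<Sum>l<n. if i = l then c i * Lap $$ (i,k) else 0)"
    by (intro sum.cong) auto
  also have "\<dots> = c i * Lap $$ (i,k)"
    using assms by simp
  finally show ?thesis unfolding trans_mat_def using assms Lap_carrier
    by (simp add: diag_mat_def)
qed

lemma Lap_apply: "i < n \<Longrightarrow> (\<Sum>k<n. Lap $$ (i,k) * y k) = Lf y i"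
proof -
  assume i: "i < n"
  have "(\<Sum>k<n. Lap $$ (i,k) * y k) = (\<Sum>k<n. (if i = k then real (degree n E i) * y k else 0) - (if E i k then y k else 0))"
    using i by (intro sum.cong refl) (simp add: Lap_entry left_diff_distrib)
  also have "\<dots> = real (degree n E i) * y i - (\<Sum>k<n. if E i k then y k else 0)"
    using i by (simp add: sum_subtractf)
  also have "Lf y i = (\<Sum>k<n. if E i k then y i else 0) - (\<Sum>k<n. if E i k then y k else 0)"
    unfolding Lf_alt by (simp add: sum_subtractf[symmetric] if_distrib cong: if_cong)
  moreover have "(\<Sum>k<n. if E i k then y i else 0) = real (degree n E i) * y i"
    using sum_Nb[of "\<lambda>_. y i" i, symmetric] by (simp add: Nb_card)
  ultimately show ?thesis by simp
qed

lemma P_apply: "i < n \<Longrightarrow> (\<Sum>k<n. P $$ (i,k) * y k) = y i - c i * Lf y i"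
proof -
  assume i: "i < n"
  have "(\<Sum>k<n. P $$ (i,k) * y k) = (\<Sum>k<n. (if i = k then y k else 0) - c i * (Lap $$ (i,k) * y k))"
    using i by (intro sum.cong refl) (simp add: P_entry algebra_simps)
  also have "\<dots> = y i - c i * (\<Sum>k<n. Lap $$ (i,k) * y k)"
    using i by (simp add: sum_subtractf sum_distrib_left)
  finally show ?thesis using Lap_apply[OF i] by simp
qed

lemma Lf_const: "Lf (\<lambda>_. a) i = 0" unfolding Lf_def by simp

lemma P_rowsum: "i < n \<Longrightarrow> (\<Sum>k<n. P $$ (i,k)) = 1"
  using P_apply[of i "\<lambda>_. 1"] by (simp add: Lf_const)

lemma Ppow_Suc: "i < n \<Longrightarrow> j < n \<Longrightarrow>
   (P ^\<^sub>m Suc t) $$ (i,j) = (\<Sum>k<n. P $$ (i,k) * (P ^\<^sub>m t) $$ (k,j))"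
  unfolding pow_mat_Suc_left[OF P_carrier] by (rule mat_mult_entry) (auto simp: P_carrier)

definition zz :: "nat \<Rightarrow> nat \<Rightarrow> nat \<Rightarrow> real" where
  "zz j t i = (P ^\<^sub>m t) $$ (i,j) - pi j"

lemma zz_rec: "j < n \<Longrightarrow> i < n \<Longrightarrow> zz j (Suc t) i = zz j t i - c i * Lf (zz j t) i"
proof -
  assume j: "j < n" and i: "i < n"
  have "zz j (Suc t) i = (\<Sum>k<n. P $$ (i,k) * (P ^\<^sub>m t) $$ (k,j)) - (\<Sum>k<n. P $$ (i,k)) * pi j"
    unfolding zz_def using Ppow_Suc[OF i j] P_rowsum[OF i] by simp
  also have "\<dots> = (\<Sum>k<n. P $$ (i,k) * zz j t k)"
    unfolding zz_def by (simp add: sum_distrib_right sum_subtractf right_diff_distrib)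
  finally show ?thesis using P_apply[OF i] by simp
qed

lemma zz0: "j < n \<Longrightarrow> i < n \<Longrightarrow> zz j 0 i = (if i = j then 1 else 0) - pi j"
  unfolding zz_def using P_carrier by simp

lemma W_zz0: "j < n \<Longrightarrow> W (zz j 0) = 0"
proof -
  assume j: "j < n"
  have "W (zz j 0) = (\<Sum>i<n. (if i = j then 1 / c i else 0) - pi j * (1 / c i))"
    unfolding W_def by (intro sum.cong refl) (simp add: zz0 j diff_divide_distrib)
  also have "\<dots> = (\<Sum>i<n. (if i = j then 1 / c i else 0)) - pi j * SW"
    unfolding SW_def by (simp add: sum_subtractf sum_distrib_left)
  also have "(\<Sum>i<n. (if i = j then 1 / c i else 0)) = 1 / c j" using j by simp
  also have "pi j * SW = 1 / c j" using n_pos_SW j unfolding pi_def by simp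
  finally show ?thesis by simp
qed

lemma Ppow_conv: "i < n \<Longrightarrow> j < n \<Longrightarrow> zz j t i = zz j t i"
  by simp

lemma zz_tends: "i < n \<Longrightarrow> j < n \<Longrightarrow> (\<lambda>t. zz j t i) \<longlonglongrightarrow> 0"
  by (rule conv[OF zz_rec W_zz0]) auto

definition Nr :: "real mat" where "Nr = mat n n (\<lambda>(i,k). Lap $$ (i,k) + 1 / c k)"

lemma Nr_carrier: "Nr \<in> carrier_mat n n" unfolding Nr_def by simp

lemma Nr_apply: "i < n \<Longrightarrow> (\<Sum>k<n. Nr $$ (i,k) * y k) = Lf y i + W y"
proof -
  assume i: "i < n"
  have "(\<Sum>k<n. Nr $$ (i,k) * y k) = (\<Sum>k<n. Lap $$ (i,k) * y k + y k / c k)"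
    unfolding Nr_def using i by (intro sum.cong refl) (simp add: distrib_right)
  thus ?thesis unfolding W_def using Lap_apply[OF i] by (simp add: sum.distrib)
qed

lemma Lf_zero_const:
  assumes "\<And>i. i < n \<Longrightarrow> Lf y i = 0" and a: "a < n" and b: "b < n"
  shows "y a = y b"
proof -
  have S0: "(\<Sum>i<n. \<Sum>j\<in>Nb i. (y i - y j)^2) = 0" using quad[of y] assms(1) by simp
  have "(\<Sum>i<n. \<Sum>j\<in>Nb i. (y i - y j)^2) = 0 \<longleftrightarrow> (\<forall>i\<in>{..<n}. (\<Sum>j\<in>Nb i. (y i - y j)^2) = 0)"
    by (rule sum_nonneg_eq_0_iff) (auto intro: sum_nonneg)
  with S0 have inner: "\<forall>i\<in>{..<n}. (\<Sum>j\<in>Nb i. (y i - y j)^2) = 0" by blast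
  have edge0: "(y i - y j)^2 = 0" if "i < n" "j \<in> Nb i" for i j
  proof -
    have "(\<Sum>j\<in>Nb i. (y i - y j)^2) = 0 \<longleftrightarrow> (\<forall>j\<in>Nb i. (y i - y j)^2 = 0)"
      by (rule sum_nonneg_eq_0_iff) auto
    with inner that show ?thesis by blast
  qed
  let ?R = "\<lambda>a b. a < n \<and> b < n \<and> E a b"
  have "?R\<^sup>*\<^sup>* a b \<Longrightarrow> y a = y b" for b
  proof (induction rule: rtranclp_induct)
    case base then show ?case by simp
  next
    case (step b' b'')
    hence "(y b' - y b'')^2 = 0" by (intro edge0) (auto simp: Nb_def)
    with step show ?case by simp
  qed
  thus ?thesis using conn a b unfolding graph_connected_def by blast
qed

lemma Nr_det: assumes "n > 0" shows "det Nr \<noteq> 0"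
proof
  assume "det Nr = 0"
  then obtain v where v: "v \<in> carrier_vec n" "v \<noteq> 0\<^sub>v n" "Nr *\<^sub>v v = 0\<^sub>v n"
    using det_0_iff_vec_prod_zero_field[OF Nr_carrier] by blast
  define y where "y k = v $ k" for k
  have eq: "Lf y i + W y = 0" if i: "i < n" for i
  proof -
    have "(Nr *\<^sub>v v) $ i = 0" using v i by simp
    thus ?thesis using mat_vec_entry[OF Nr_carrier v(1) i] Nr_apply[OF i] unfolding y_def by simp
  qed
  have "(\<Sum>i<n. Lf y i + W y) = 0" using eq by simp
  hence "real n * W y = 0" by (simp add: sum.distrib sum_Lf)
  hence W0: "W y = 0" using assms by simp
  hence Lf0: "\<And>i. i < n \<Longrightarrow> Lf y i = 0" using eq by simp
  have yk: "y k = y 0" if "k < n" for k using Lf_zero_const[OF Lf0 that] assms by blast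
  have "W y = (\<Sum>k<n. y 0 * (1 / c k))" unfolding W_def
  proof (intro sum.cong refl)
    fix k assume "k \<in> {..<n}"
    hence "y k = y 0" by (intro yk) simp
    thus "y k / c k = y 0 * (1 / c k)" by simp
  qed
  hence "W y = y 0 * SW" unfolding SW_def by (simp only: sum_distrib_left[symmetric])
  hence y00: "y 0 = 0" using W0 n_pos_SW[OF assms] by simp
  have "\<And>k. k < n \<Longrightarrow> v $ k = 0" using yk y00 unfolding y_def by metis
  hence "v = 0\<^sub>v n" using v(1) by (intro eq_vecI) auto
  with v(2) show False by simp
qed

definition rr :: "nat \<Rightarrow> nat \<Rightarrow> real" where "rr j i = zz j 0 i / c i"

definition Ninv :: "real mat" where
  "Ninv = (SOME B. B \<in> carrier_mat n n \<and> B * Nr = 1\<^sub>m n \<and> Nr * B = 1\<^sub>m n)"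

lemma Ninv: assumes "n > 0"
  shows "Ninv \<in> carrier_mat n n" "Ninv * Nr = 1\<^sub>m n" "Nr * Ninv = 1\<^sub>m n"
proof -
  have "Nr \<in> Units (ring_mat TYPE(real) n ())"
    by (rule det_non_zero_imp_unit[OF Nr_carrier Nr_det[OF assms]])
  hence "\<exists>B. B \<in> carrier_mat n n \<and> B * Nr = 1\<^sub>m n \<and> Nr * B = 1\<^sub>m n"
    unfolding Units_def ring_mat_def by auto
  from someI_ex[OF this] show "Ninv \<in> carrier_mat n n" "Ninv * Nr = 1\<^sub>m n" "Nr * Ninv = 1\<^sub>m n"
    unfolding Ninv_def by auto
qed

definition Gam :: "nat \<Rightarrow> nat \<Rightarrow> real" where
  "Gam i j = (Ninv *\<^sub>v vec n (rr j)) $ i"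

lemma Gam_solves: assumes "n > 0" "j < n" "i < n"
  shows "(\<Sum>k<n. Nr $$ (i,k) * Gam k j) = rr j i"
proof -
  have "Nr *\<^sub>v (Ninv *\<^sub>v vec n (rr j)) = (Nr * Ninv) *\<^sub>v vec n (rr j)"
    using Ninv[OF assms(1)] Nr_carrier by (subst assoc_mult_mat_vec) auto
  also have "\<dots> = vec n (rr j)" using Ninv[OF assms(1)] by simp
  finally have "(Nr *\<^sub>v (Ninv *\<^sub>v vec n (rr j))) $ i = rr j i" using assms by simp
  thus ?thesis using mat_vec_entry[OF Nr_carrier _ assms(3), of "Ninv *\<^sub>v vec n (rr j)"] Ninv[OF assms(1)]
    unfolding Gam_def by simp
qed

lemma Gam_eqs: assumes "n > 0" "j < n"
  shows "W (\<lambda>k. Gam k j) = 0" "\<And>i. i < n \<Longrightarrow> Lf (\<lambda>k. Gam k j) i = rr j i"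
proof -
  have eq: "Lf (\<lambda>k. Gam k j) i + W (\<lambda>k. Gam k j) = rr j i" if "i < n" for i
    using Gam_solves[OF assms that] Nr_apply[OF that] by simp
  have "(\<Sum>i<n. Lf (\<lambda>k. Gam k j) i + W (\<lambda>k. Gam k j)) = (\<Sum>i<n. rr j i)"
    using eq by simp
  moreover have "(\<Sum>i<n. rr j i) = W (zz j 0)" unfolding rr_def W_def ..
  ultimately have "real n * W (\<lambda>k. Gam k j) = 0" using W_zz0[OF assms(2)]
    by (simp add: sum.distrib sum_Lf)
  thus W0: "W (\<lambda>k. Gam k j) = 0" using assms by simp
  show "\<And>i. i < n \<Longrightarrow> Lf (\<lambda>k. Gam k j) i = rr j i" using eq W0 by simp
qed

lemma Lf_sum: "Lf (\<lambda>k. \<Sum>s\<in>S. f s k) i = (\<Sum>s\<in>S. Lf (f s) i)"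
proof -
  have "Lf (\<lambda>k. \<Sum>s\<in>S. f s k) i = (\<Sum>j\<in>Nb i. \<Sum>s\<in>S. f s i - f s j)"
    unfolding Lf_def by (simp add: sum_subtractf)
  also have "\<dots> = (\<Sum>s\<in>S. \<Sum>j\<in>Nb i. f s i - f s j)" by (rule sum.swap)
  finally show ?thesis unfolding Lf_def .
qed

lemma Lf_diff: "Lf (\<lambda>k. f k - g k) i = Lf f i - Lf g i"
  unfolding Lf_def by (simp add: sum_subtractf[symmetric] algebra_simps)

lemma W_sum: "W (\<lambda>k. \<Sum>s\<in>S. f s k) = (\<Sum>s\<in>S. W (f s))"
  unfolding W_def sum_divide_distrib by (rule sum.swap)

lemma W_diff: "W (\<lambda>k. f k - g k) = W f - W g"
  unfolding W_def by (simp add: sum_subtractf[symmetric] diff_divide_distrib)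

lemma gamma_seq_zz: "gamma_seq n E c i j t = (\<Sum>s<t. zz j s i)"
  unfolding gamma_seq_def zz_def pi_stat[symmetric] by (simp add: sum_subtractf)

lemma gamma_conv: assumes "n > 0" "i < n" "j < n"
  shows "gamma_seq n E c i j \<longlonglongrightarrow> Gam i j"
proof -
  define S where "S t k = (\<Sum>s<t. zz j s k)" for t k
  define D where "D t k = S t k - Gam k j" for t k
  have Lf_S: "c k * Lf (S t) k = zz j 0 k - zz j t k" if k: "k < n" for t k
  proof -
    have "c k * Lf (S t) k = (\<Sum>s<t. zz j s k - zz j (Suc s) k)"
      unfolding S_def Lf_sum sum_distrib_left using zz_rec[OF assms(3) k] by simp
    also have "\<dots> = zz j 0 k - zz j t k" by (rule sum_lessThan_telescope')
    finally show ?thesis .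
  qed
  have W_S: "W (S t) = 0" for t
    unfolding S_def W_sum using W_iter[OF zz_rec[OF assms(3)] W_zz0[OF assms(3)]] by simp
  have ND: "(\<Sum>l<n. Nr $$ (k,l) * D t l) = - zz j t k / c k" if k: "k < n" for t k
  proof -
    have "(\<Sum>l<n. Nr $$ (k,l) * D t l) = Lf (D t) k + W (D t)" by (rule Nr_apply[OF k])
    also have "W (D t) = 0" unfolding D_def W_diff W_S using Gam_eqs(1)[OF assms(1,3)] by simp
    also have "Lf (D t) k = Lf (S t) k - rr j k"
      unfolding D_def Lf_diff using Gam_eqs(2)[OF assms(1,3) k] by simp
    also have "Lf (S t) k = (zz j 0 k - zz j t k) / c k" using Lf_S[OF k, of t] cpos[OF k]
      by (simp add: field_simps)
    finally show ?thesis unfolding rr_def by (simp add: diff_divide_distrib)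
  qed
  have Dexp: "D t i = (\<Sum>k<n. Ninv $$ (i,k) * (- zz j t k / c k))" for t
  proof -
    have v: "vec n (D t) \<in> carrier_vec n" by simp
    have "vec n (D t) = (Ninv * Nr) *\<^sub>v vec n (D t)" using Ninv[OF assms(1)] by simp
    also have "\<dots> = Ninv *\<^sub>v (Nr *\<^sub>v vec n (D t))"
      using Ninv[OF assms(1)] Nr_carrier by (subst assoc_mult_mat_vec) auto
    finally have "D t i = (Ninv *\<^sub>v (Nr *\<^sub>v vec n (D t))) $ i"
      using assms(2) by (metis index_vec)
    also have "\<dots> = (\<Sum>k<n. Ninv $$ (i,k) * (Nr *\<^sub>v vec n (D t)) $ k)"
      by (rule mat_vec_entry[OF Ninv(1)[OF assms(1)] _ assms(2)]) (use Nr_carrier in auto)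
    also have "\<dots> = (\<Sum>k<n. Ninv $$ (i,k) * (- zz j t k / c k))"
    proof (intro sum.cong refl)
      fix k assume k: "k \<in> {..<n}"
      have "(Nr *\<^sub>v vec n (D t)) $ k = (\<Sum>l<n. Nr $$ (k,l) * D t l)"
        using mat_vec_entry[OF Nr_carrier v] k by simp
      thus "Ninv $$ (i,k) * (Nr *\<^sub>v vec n (D t)) $ k = Ninv $$ (i,k) * (- zz j t k / c k)"
        using ND k by simp
    qed
    finally show ?thesis .
  qed
  have "(\<lambda>t. \<Sum>k<n. Ninv $$ (i,k) * (- zz j t k / c k)) \<longlonglongrightarrow> (\<Sum>k<n. Ninv $$ (i,k) * (- 0 / c k))"
    by (intro tendsto_sum tendsto_mult tendsto_const tendsto_divide tendsto_minus zz_tends assms)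
       (use cpos in \<open>auto simp: less_imp_neq[symmetric]\<close>)
  hence "(\<lambda>t. D t i) \<longlonglongrightarrow> 0" using Dexp by simp
  hence "(\<lambda>t. D t i + Gam i j) \<longlonglongrightarrow> 0 + Gam i j" by (intro tendsto_add tendsto_const)
  thus ?thesis unfolding D_def S_def gamma_seq_zz by simp
qed


end


lemma det_bound_real:
  fixes M :: "real mat"
  assumes M: "M \<in> carrier_mat n n" and b: "\<And>i k. i < n \<Longrightarrow> k < n \<Longrightarrow> \<bar>M $$ (i,k)\<bar> \<le> b k"
  shows "\<bar>det M\<bar> \<le> fact n * (\<Prod>k<n. b k)"
proof -
  let ?P = "{p. p permutes {0..<n}}"
  have "\<bar>det M\<bar> = \<bar>\<Sum>p\<in>?P. signof p * (\<Prod>i = 0..<n. M $$ (i, p i))\<bar>"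
    using det_def'[OF M] by simp
  also have "\<dots> \<le> (\<Sum>p\<in>?P. \<bar>signof p * (\<Prod>i = 0..<n. M $$ (i, p i))\<bar>)"
    by (rule sum_abs)
  also have "\<dots> \<le> (\<Sum>p\<in>?P. (\<Prod>k<n. b k))"
  proof (rule sum_mono)
    fix p assume p: "p \<in> ?P"
    hence pp: "p permutes {0..<n}" by simp
    have pi: "p i < n" if "i < n" for i
      using permutes_in_image[OF pp, of i] that by simp
    have sg: "\<bar>(signof p :: real)\<bar> = 1" by (simp add: sign_def)
    have "\<bar>signof p * (\<Prod>i = 0..<n. M $$ (i, p i))\<bar> = (\<Prod>i = 0..<n. \<bar>M $$ (i, p i)\<bar>)"
      by (simp only: abs_mult sg abs_prod mult_1)
    also have "\<dots> \<le> (\<Prod>i = 0..<n. b (p i))"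
    proof (rule prod_mono)
      fix i assume "i \<in> {0..<n}"
      hence "i < n" by simp
      thus "0 \<le> \<bar>M $$ (i, p i)\<bar> \<and> \<bar>M $$ (i, p i)\<bar> \<le> b (p i)" using b[OF _ pi] by simp
    qed
    also have "(\<Prod>i = 0..<n. b (p i)) = (\<Prod>i = 0..<n. b i)"
      using prod.permute[OF pp, of b] by (simp add: comp_def)
    finally show "\<bar>signof p * (\<Prod>i = 0..<n. M $$ (i, p i))\<bar> \<le> (\<Prod>k<n. b k)"
      by (simp add: atLeast0LessThan)
  qed
  also have "\<dots> = fact n * (\<Prod>k<n. b k)"
    using card_permutations[of "{0..<n}" n] by simp
  finally show ?thesis .
qed

locale flock_rat = flock +
  fixes \<alpha> \<beta> :: "nat \<Rightarrow> int"
  assumes apos: "\<And>i. i < n \<Longrightarrow> \<alpha> i > 0" and bpos: "\<And>i. i < n \<Longrightarrow> \<beta> i > 0"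
    and c_eq: "\<And>i. i < n \<Longrightarrow> c i = of_int (\<alpha> i) / of_int (\<beta> i)"
    and npos: "n > 0"
begin

definition Aex :: "nat \<Rightarrow> int" where "Aex i = (\<Prod>l\<in>{..<n} - {i}. \<alpha> l)"
definition AA :: int where "AA = (\<Prod>l<n. \<alpha> l)"
definition TT :: int where "TT = (\<Sum>k<n. \<beta> k * Aex k)"
definition Lint :: "nat \<Rightarrow> nat \<Rightarrow> int" where
  "Lint i k = (if i = k then int (degree n E i) else 0) - (if E i k then 1 else 0)"
definition Nint :: "int mat" where "Nint = mat n n (\<lambda>(i,k). \<alpha> k * Lint i k + \<beta> k)"
definition Rint :: "nat \<Rightarrow> nat \<Rightarrow> int" where
  "Rint j i = \<beta> i * Aex i * ((if i = j then TT else 0) - \<beta> j * Aex j)"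
definition Mint :: "nat \<Rightarrow> nat \<Rightarrow> int mat" where
  "Mint j i = replace_col Nint (vec n (Rint j)) i"

lemma anz: "i < n \<Longrightarrow> \<alpha> i \<noteq> 0" using apos[of i] by simp

lemma AA_split: "i < n \<Longrightarrow> AA = \<alpha> i * Aex i"
  unfolding AA_def Aex_def by (subst prod.remove[of _ i]) auto

lemma Aex_pos: "Aex i > 0" unfolding Aex_def using apos by (intro prod_pos) auto
lemma AA_pos: "AA > 0" unfolding AA_def using apos by (intro prod_pos) auto
lemma TT_pos: "TT > 0" unfolding TT_def using npos bpos Aex_pos
  by (intro sum_pos) (auto intro: mult_pos_pos)

lemma inv_c: "i < n \<Longrightarrow> 1 / c i = of_int (\<beta> i) / of_int (\<alpha> i)"
  using c_eq by simp

lemma inv_c_A: "i < n \<Longrightarrow> 1 / c i = of_int (\<beta> i * Aex i) / of_int AA"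
proof -
  assume i: "i < n"
  have "Aex i \<noteq> 0" using Aex_pos[of i] by simp
  thus ?thesis using inv_c[OF i] AA_split[OF i] by simp
qed

lemma SW_eq: "SW = of_int TT / of_int AA"
  unfolding SW_def TT_def using inv_c_A by (simp add: sum_divide_distrib)

lemma pi_eq: "j < n \<Longrightarrow> pi j = of_int (\<beta> j * Aex j) / of_int TT"
  unfolding pi_def SW_eq using inv_c_A AA_pos TT_pos by simp

lemma Lint_Lap: "i < n \<Longrightarrow> k < n \<Longrightarrow> real_of_int (Lint i k) = Lap $$ (i,k)"
  unfolding Lint_def using Lap_entry by simp

lemma rr_eq: "i < n \<Longrightarrow> j < n \<Longrightarrow> of_int AA * of_int TT * rr j i = of_int (Rint j i)"
proof -
  assume i: "i < n" and j: "j < n"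
  have "rr j i = ((if i = j then 1 else 0) - pi j) * (1 / c i)"
    unfolding rr_def using zz0[OF j i] by simp
  also have "\<dots> = ((if i = j then 1 else 0) - of_int (\<beta> j * Aex j) / of_int TT) * (of_int (\<beta> i * Aex i) / of_int AA)"
    using pi_eq[OF j] inv_c_A[OF i] by simp
  finally show ?thesis unfolding Rint_def using AA_pos TT_pos
    by (simp add: field_simps)
qed

lemma Nint_carrier: "Nint \<in> carrier_mat n n" unfolding Nint_def by simp

abbreviation "Nre \<equiv> map_mat real_of_int Nint"

lemma Nre_entry: "i < n \<Longrightarrow> k < n \<Longrightarrow> Nre $$ (i,k) = of_int (\<alpha> k) * Nr $$ (i,k)"
proof -
  assume i: "i < n" and k: "k < n"
  show ?thesis unfolding Nint_def Nr_def using Lint_Lap[OF i k] inv_c[OF k] anz[OF k] i k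
    by (simp add: distrib_left)
qed

lemma det_Nint: "det Nint \<noteq> 0"
proof -
  define Dg :: "real mat" where "Dg = mat n n (\<lambda>(i,j). if i = j then of_int (\<alpha> i) else 0)"
  have Dg: "Dg \<in> carrier_mat n n" unfolding Dg_def by simp
  have "Nre = Nr * Dg"
  proof (rule eq_matI)
    fix i k assume ik: "i < dim_row (Nr * Dg)" "k < dim_col (Nr * Dg)"
    hence ik': "i < n" "k < n" using Nr_carrier Dg by auto
    have "(Nr * Dg) $$ (i,k) = (\<Sum>l<n. Nr $$ (i,l) * Dg $$ (l,k))"
      by (rule mat_mult_entry[OF Nr_carrier Dg ik'])
    also have "\<dots> = (\<Sum>l<n. if l = k then Nr $$ (i,k) * of_int (\<alpha> k) else 0)"
      using ik' unfolding Dg_def by (intro sum.cong refl) auto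
    also have "\<dots> = Nre $$ (i,k)" using ik' Nre_entry by simp
    finally show "Nre $$ (i,k) = (Nr * Dg) $$ (i,k)" by simp
  qed (use Nr_carrier Dg Nint_carrier in auto)
  hence "det Nre = det Nr * det Dg" using det_mult[OF Nr_carrier Dg] by simp
  moreover have "det Dg = (\<Prod>i = 0..<n. of_int (\<alpha> i))"
    using det_upper_triangular[OF _ Dg] unfolding prod_list_diag_prod upper_triangular_def Dg_def
    by simp
  moreover have "(\<Prod>i = 0..<n. real_of_int (\<alpha> i)) \<noteq> 0" using anz by simp
  ultimately have "det Nre \<noteq> 0" using Nr_det[OF npos] by simp
  thus ?thesis by (simp add: of_int_hom.hom_det)
qed

lemma Gam_cramer: assumes i: "i < n" and j: "j < n"
  shows "Gam i j * (of_int AA * of_int TT * of_int (det Nint)) = of_int (\<alpha> i) * of_int (det (Mint j i))"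
proof -
  define x where "x = vec n (\<lambda>k. of_int AA * of_int TT * Gam k j / of_int (\<alpha> k))"
  have x: "x \<in> carrier_vec n" unfolding x_def by simp
  have Nx: "Nre *\<^sub>v x = map_vec real_of_int (vec n (Rint j))"
  proof (rule eq_vecI)
    fix l assume "l < dim_vec (map_vec real_of_int (vec n (Rint j)))"
    hence l: "l < n" by simp
    have "(Nre *\<^sub>v x) $ l = (\<Sum>k<n. Nre $$ (l,k) * x $ k)"
      by (rule mat_vec_entry[OF _ x l]) (use Nint_carrier in auto)
    also have "\<dots> = (\<Sum>k<n. of_int AA * of_int TT * (Nr $$ (l,k) * Gam k j))"
      using l anz unfolding x_def by (intro sum.cong refl) (simp add: Nre_entry)
    also have "\<dots> = of_int AA * of_int TT * (\<Sum>k<n. Nr $$ (l,k) * Gam k j)"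
      by (rule sum_distrib_left[symmetric])
    also have "\<dots> = of_int AA * of_int TT * rr j l"
      using Gam_solves[OF npos j l] by (simp only:)
    also have "\<dots> = of_int (Rint j l)" by (rule rr_eq[OF l j])
    finally show "(Nre *\<^sub>v x) $ l = map_vec real_of_int (vec n (Rint j)) $ l" using l by simp
  qed (use Nint_carrier in simp)
  have "det (replace_col Nre (Nre *\<^sub>v x) i) = x $ i * det Nre"
    by (rule cramer_lemma_mat[OF _ x i]) (use Nint_carrier in auto)
  moreover have "replace_col Nre (Nre *\<^sub>v x) i = map_mat real_of_int (Mint j i)"
    unfolding Nx Mint_def replace_col_def using Nint_carrier by (intro eq_matI) auto
  ultimately have "real_of_int (det (Mint j i)) = x $ i * of_int (det Nint)"
    by (simp add: of_int_hom.hom_det)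
  thus ?thesis unfolding x_def using i apos[OF i] by (simp add: field_simps)
qed

definition qq :: int where "qq = AA * TT * \<bar>det Nint\<bar>"
definition num :: "nat \<Rightarrow> nat \<Rightarrow> int" where "num i j = \<alpha> i * det (Mint j i) * sgn (det Nint)"

lemma qq_pos: "qq > 0" unfolding qq_def using AA_pos TT_pos det_Nint by simp

lemma Gam_rep: assumes "i < n" "j < n" shows "Gam i j = of_int (num i j) / of_int qq"
proof -
  have e: "Gam i j * (of_int AA * of_int TT * of_int (det Nint)) = of_int (\<alpha> i) * of_int (det (Mint j i))"
    by (rule Gam_cramer[OF assms])
  have "Gam i j * of_int qq = Gam i j * (of_int AA * of_int TT * of_int (det Nint)) * of_int (sgn (det Nint))"
    unfolding qq_def by (simp add: abs_sgn mult_ac)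
  also have "\<dots> = of_int (num i j)" unfolding e num_def by simp
  finally show ?thesis using qq_pos by (simp add: field_simps)
qed


end

lemma mb_mult:
  fixes x y Z Q :: real
  assumes "1 \<le> Z" "1 \<le> Q" "\<bar>x\<bar> \<le> Z ^ a * Q ^ b" "\<bar>y\<bar> \<le> Z ^ c * Q ^ d"
  shows "\<bar>x * y\<bar> \<le> Z ^ (a + c) * Q ^ (b + d)"
proof -
  have "\<bar>x * y\<bar> = \<bar>x\<bar> * \<bar>y\<bar>" by (rule abs_mult)
  also have "\<dots> \<le> (Z ^ a * Q ^ b) * (Z ^ c * Q ^ d)"
    using assms by (intro mult_mono) auto
  also have "\<dots> = Z ^ (a + c) * Q ^ (b + d)" by (simp add: power_add mult_ac)
  finally show ?thesis .
qed

lemma mb_weak: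
  fixes x Z Q :: real
  assumes "1 \<le> Z" "1 \<le> Q" "\<bar>x\<bar> \<le> Z ^ a * Q ^ b" "a \<le> a'" "b \<le> b'"
  shows "\<bar>x\<bar> \<le> Z ^ a' * Q ^ b'"
proof -
  have "Z ^ a * Q ^ b \<le> Z ^ a' * Q ^ b'"
    using assms by (intro mult_mono power_increasing) auto
  thus ?thesis using assms(3) by linarith
qed

lemma mb_add:
  fixes x y Z Q :: real
  assumes "2 \<le> Z" "1 \<le> Q" "\<bar>x\<bar> \<le> Z ^ a * Q ^ b" "\<bar>y\<bar> \<le> Z ^ a * Q ^ b"
  shows "\<bar>x + y\<bar> \<le> Z ^ (a + 1) * Q ^ b"
proof -
  have "\<bar>x + y\<bar> \<le> \<bar>x\<bar> + \<bar>y\<bar>" by (rule abs_triangle_ineq)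
  also have "\<dots> \<le> 2 * (Z ^ a * Q ^ b)" using assms by simp
  also have "\<dots> \<le> Z * (Z ^ a * Q ^ b)" using assms by (intro mult_right_mono) auto
  finally show ?thesis by (simp add: mult_ac)
qed

lemma mb_sum:
  fixes g :: "nat \<Rightarrow> real" and Z Q :: real
  assumes "1 \<le> Q" "real n \<le> Z" "\<And>j. j < n \<Longrightarrow> \<bar>g j\<bar> \<le> Z ^ a * Q ^ b"
  shows "\<bar>\<Sum>j<n. g j\<bar> \<le> Z ^ (a + 1) * Q ^ b"
proof -
  have "\<bar>\<Sum>j<n. g j\<bar> \<le> (\<Sum>j<n. \<bar>g j\<bar>)" by (rule sum_abs)
  also have "\<dots> \<le> (\<Sum>j<n. Z ^ a * Q ^ b)" using assms(3) by (intro sum_mono) auto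
  also have "\<dots> = real n * (Z ^ a * Q ^ b)" by simp
  also have "\<dots> \<le> Z * (Z ^ a * Q ^ b)"
  proof (rule mult_right_mono)
    show "0 \<le> Z ^ a * Q ^ b" using assms(3)[of 0] assms(1,2) by (cases "n = 0") (auto intro: order_trans[OF abs_ge_zero])
  qed (use assms in auto)
  finally show ?thesis by (simp add: mult_ac)
qed

lemma mb_prod:
  fixes g :: "nat \<Rightarrow> real" and Q :: real
  assumes "1 \<le> Q" "finite S" "card S \<le> n" "\<And>j. j \<in> S \<Longrightarrow> 0 \<le> g j \<and> g j \<le> Q"
  shows "0 \<le> (\<Prod>j\<in>S. g j)" "(\<Prod>j\<in>S. g j) \<le> Q ^ n"
proof -
  show "0 \<le> (\<Prod>j\<in>S. g j)" using assms by (intro prod_nonneg) auto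
  have "(\<Prod>j\<in>S. g j) \<le> (\<Prod>j\<in>S. Q)" using assms by (intro prod_mono) auto
  also have "\<dots> = Q ^ card S" by simp
  also have "\<dots> \<le> Q ^ n" using assms by (intro power_increasing) auto
  finally show "(\<Prod>j\<in>S. g j) \<le> Q ^ n" .
qed

lemma frac_sum:
  fixes f e :: "nat \<Rightarrow> int" and a :: "nat \<Rightarrow> real"
  assumes "\<And>j. j < n \<Longrightarrow> f j > 0"
  shows "(\<Sum>j<n. a j * (of_int (e j) / of_int (f j))) =
         (\<Sum>j<n. a j * of_int (e j * (\<Prod>l\<in>{..<n} - {j}. f l))) / of_int (\<Prod>j<n. f j)"
proof -
  have Fpos: "(\<Prod>l\<in>{..<n} - {j}. f l) > 0" for j using assms by (intro prod_pos) auto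
  have "(\<Sum>j<n. a j * (of_int (e j) / of_int (f j))) =
        (\<Sum>j<n. a j * of_int (e j * (\<Prod>l\<in>{..<n} - {j}. f l)) / of_int (\<Prod>j<n. f j))"
  proof (intro sum.cong refl)
    fix j assume "j \<in> {..<n}"
    hence j: "j < n" by simp
    have F: "(\<Prod>j<n. f j) = f j * (\<Prod>l\<in>{..<n} - {j}. f l)" using j by (subst prod.remove[of _ j]) auto
    have "f j \<noteq> 0" using assms[OF j] by simp
    moreover have "(\<Prod>l\<in>{..<n} - {j}. f l) \<noteq> 0" using Fpos[of j] by linarith
    ultimately show "a j * (of_int (e j) / of_int (f j)) =
        a j * of_int (e j * (\<Prod>l\<in>{..<n} - {j}. f l)) / of_int (\<Prod>j<n. f j)"
      unfolding F by (simp add: field_simps)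
  qed
  also have "\<dots> = (\<Sum>j<n. a j * of_int (e j * (\<Prod>l\<in>{..<n} - {j}. f l))) / of_int (\<Prod>j<n. f j)"
    by (rule sum_divide_distrib[symmetric])
  finally show ?thesis .
qed

locale flock_bnd = flock_rat +
  fixes B Q :: real
  assumes Q1: "1 \<le> Q" and aB: "\<And>i. i < n \<Longrightarrow> real_of_int (\<alpha> i) \<le> B"
    and bB: "\<And>i. i < n \<Longrightarrow> real_of_int (\<beta> i) \<le> B"
begin

definition ZZ :: real where "ZZ = 2 * real n * B"

lemma B1: "1 \<le> B" using aB[OF npos] apos[OF npos] by linarith
lemma a1: "i < n \<Longrightarrow> 1 \<le> real_of_int (\<alpha> i)" using apos[of i] by linarith
lemma b1: "i < n \<Longrightarrow> 1 \<le> real_of_int (\<beta> i)" using bpos[of i] by linarith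
lemma n1: "1 \<le> real n" using npos by simp
lemma Z_ge: "B \<le> ZZ" "real n \<le> ZZ" "1 \<le> ZZ" "2 * real n \<le> ZZ"
proof -
  show "B \<le> ZZ" unfolding ZZ_def using B1 n1 by (simp add: mult_le_cancel_right1)
  show "2 * real n \<le> ZZ" unfolding ZZ_def using B1 n1 by simp
  thus "real n \<le> ZZ" by simp
  thus "1 \<le> ZZ" using n1 by simp
qed
lemma Z_pow_mono: "a \<le> b \<Longrightarrow> ZZ ^ a \<le> ZZ ^ b" using Z_ge(3) by (rule power_increasing[rotated])

lemma Aex_bnd: "real_of_int (Aex i) \<le> B ^ n"
proof -
  have "real_of_int (Aex i) = (\<Prod>l\<in>{..<n} - {i}. real_of_int (\<alpha> l))" unfolding Aex_def by simp
  also have "\<dots> \<le> (\<Prod>l\<in>{..<n} - {i}. B)" using aB apos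
    by (intro prod_mono) (auto simp: less_imp_le)
  also have "\<dots> = B ^ card ({..<n} - {i})" by simp
  also have "\<dots> \<le> B ^ n" using B1 by (intro power_increasing) (auto simp: card_Diff_subset_Int)
  finally show ?thesis .
qed

lemma AA_bnd: "real_of_int AA \<le> B ^ n"
proof -
  have "real_of_int AA = (\<Prod>l<n. real_of_int (\<alpha> l))" unfolding AA_def by simp
  also have "\<dots> \<le> (\<Prod>l<n. B)" using aB apos by (intro prod_mono) (auto simp: less_imp_le)
  finally show ?thesis by simp
qed

lemma TT_bnd: "real_of_int TT \<le> real n * B ^ (n+1)"
proof -
  have "real_of_int TT = (\<Sum>k<n. real_of_int (\<beta> k) * real_of_int (Aex k))" unfolding TT_def by simp
  also have "\<dots> \<le> (\<Sum>k<n. B * B ^ n)"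
    using bB bpos Aex_bnd Aex_pos B1 by (intro sum_mono mult_mono) (auto simp: less_imp_le)
  finally show ?thesis by simp
qed

lemma deg_le: "real (degree n E i) \<le> real n"
proof -
  have "degree n E i = card (Nb i)" using Nb_card by simp
  also have "\<dots> \<le> card {..<n}" unfolding Nb_def by (intro card_mono) auto
  finally show ?thesis by simp
qed

lemma Lint_bnd: "\<bar>real_of_int (Lint i k)\<bar> \<le> real n"
  unfolding Lint_def using deg_le[of i] n1 irrE[of i] by auto

lemma Nint_bnd: assumes "i < n" "k < n" shows "\<bar>real_of_int (Nint $$ (i,k))\<bar> \<le> ZZ"
proof -
  have "\<bar>real_of_int (Nint $$ (i,k))\<bar> = \<bar>real_of_int (\<alpha> k) * real_of_int (Lint i k) + real_of_int (\<beta> k)\<bar>"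
    unfolding Nint_def using assms by simp
  also have "\<dots> \<le> real_of_int (\<alpha> k) * \<bar>real_of_int (Lint i k)\<bar> + real_of_int (\<beta> k)"
    using a1[OF assms(2)] b1[OF assms(2)] by (simp add: abs_mult abs_triangle_ineq[THEN order_trans])
  also have "\<dots> \<le> B * real n + B" using aB[OF assms(2)] bB[OF assms(2)] Lint_bnd[of i k] a1[OF assms(2)]
    by (intro add_mono mult_mono) auto
  also have "\<dots> \<le> ZZ" unfolding ZZ_def using n1 B1 by (simp add: algebra_simps)
  finally show ?thesis .
qed

lemma bA_bnd: assumes "j < n"
  shows "0 \<le> real_of_int (\<beta> j * Aex j)" "real_of_int (\<beta> j * Aex j) \<le> B ^ (n+1)"
proof -
  show "0 \<le> real_of_int (\<beta> j * Aex j)" using bpos[OF assms] Aex_pos[of j] by simp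
  have "real_of_int (\<beta> j * Aex j) = real_of_int (\<beta> j) * real_of_int (Aex j)" by simp
  also have "\<dots> \<le> B * B ^ n" using bB[OF assms] Aex_bnd[of j] Aex_pos[of j] B1
    by (intro mult_mono) auto
  finally show "real_of_int (\<beta> j * Aex j) \<le> B ^ (n+1)" by simp
qed

lemma u_bnd: assumes "j < n"
  shows "\<bar>real_of_int ((if i = j then TT else 0) - \<beta> j * Aex j)\<bar> \<le> 2 * real n * B ^ (n+1)"
proof -
  have "\<bar>real_of_int ((if i = j then TT else 0) - \<beta> j * Aex j)\<bar> \<le> real_of_int TT + real_of_int (\<beta> j * Aex j)"
    using TT_pos bA_bnd(1)[OF assms] by auto
  also have "\<dots> \<le> real n * B ^ (n+1) + 1 * B ^ (n+1)" using TT_bnd bA_bnd(2)[OF assms] by simp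
  also have "\<dots> \<le> real n * B ^ (n+1) + real n * B ^ (n+1)" using n1 B1
    by (intro add_mono mult_right_mono) auto
  also have "\<dots> = 2 * real n * B ^ (n+1)" by simp
  finally show ?thesis .
qed

lemma Rint_bnd: assumes "i < n" "j < n" shows "\<bar>real_of_int (Rint j i)\<bar> \<le> ZZ ^ (2*n+2)"
proof -
  define u where "u = (if i = j then TT else 0) - \<beta> j * Aex j"
  have "real_of_int (Rint j i) = real_of_int (\<beta> i * Aex i) * real_of_int u"
    unfolding Rint_def u_def by (metis of_int_mult)
  hence "\<bar>real_of_int (Rint j i)\<bar> = real_of_int (\<beta> i * Aex i) * \<bar>real_of_int u\<bar>"
    using bA_bnd(1)[OF assms(1)] by (simp only: abs_mult abs_of_nonneg)
  hence "\<bar>real_of_int (Rint j i)\<bar> = real_of_int (\<beta> i * Aex i) * \<bar>real_of_int ((if i = j then TT else 0) - \<beta> j * Aex j)\<bar>"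
    unfolding u_def .
  also have "\<dots> \<le> B ^ (n+1) * (2 * real n * B ^ (n+1))"
    using bA_bnd[OF assms(1)] u_bnd[OF assms(2), of i] by (intro mult_mono) auto
  also have "\<dots> = (2 * real n) * (B ^ (n+1) * B ^ (n+1))" by (simp only: mult_ac)
  also have "\<dots> = (2 * real n) * B ^ (2*n+2)"
  proof -
    have e: "n + 1 + (n + 1) = 2*n+2" by simp
    show ?thesis by (simp only: power_add[symmetric] e)
  qed
  also have "\<dots> \<le> (2 * real n) ^ (2*n+2) * B ^ (2*n+2)"
  proof (intro mult_right_mono)
    have "(2 * real n) ^ 1 \<le> (2 * real n) ^ (2*n+2)" using n1 by (intro power_increasing) auto
    thus "2 * real n \<le> (2 * real n) ^ (2*n+2)" by simp
  qed (use B1 in auto)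
  also have "\<dots> = ZZ ^ (2*n+2)" unfolding ZZ_def by (simp add: power_mult_distrib)
  finally show ?thesis .
qed

lemma fact_Z: "fact n \<le> ZZ ^ n"
proof -
  have "(fact n :: real) \<le> of_nat (n ^ n)" by (rule fact_le_power)
  also have "\<dots> = real n ^ n" by simp
  also have "\<dots> \<le> ZZ ^ n" using Z_ge by (intro power_mono) auto
  finally show ?thesis .
qed

lemma detN_bnd: "\<bar>real_of_int (det Nint)\<bar> \<le> ZZ ^ (2*n)"
proof -
  have "\<bar>det Nre\<bar> \<le> fact n * (\<Prod>k<n. ZZ)"
    by (rule det_bound_real) (use Nint_carrier Nint_bnd in auto)
  also have "(\<Prod>k<n. ZZ) = ZZ ^ n" by simp
  also have "fact n * ZZ ^ n \<le> ZZ ^ n * ZZ ^ n" using fact_Z Z_ge by (intro mult_right_mono) auto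
  also have "\<dots> = ZZ ^ (2*n)"
  proof -
    have e: "n + n = 2*n" by simp
    show ?thesis by (simp only: power_add[symmetric] e)
  qed
  finally show ?thesis by (simp add: of_int_hom.hom_det)
qed

lemma detM_bnd: assumes i: "i < n" and j: "j < n"
  shows "\<bar>real_of_int (det (Mint j i))\<bar> \<le> ZZ ^ (4*n+2)"
proof -
  define b where "b k = (if k = i then ZZ ^ (2*n+2) else ZZ)" for k
  have Mc: "Mint j i \<in> carrier_mat n n" unfolding Mint_def replace_col_def using Nint_carrier by auto
  have "\<bar>det (map_mat real_of_int (Mint j i))\<bar> \<le> fact n * (\<Prod>k<n. b k)"
  proof (rule det_bound_real)
    show "map_mat real_of_int (Mint j i) \<in> carrier_mat n n" using Mc by simp
    fix r k assume r: "r < n" and k: "k < n"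
    show "\<bar>map_mat real_of_int (Mint j i) $$ (r,k)\<bar> \<le> b k"
      using Mc r k Nint_bnd[OF r k] Rint_bnd[OF r j] Nint_carrier
      unfolding Mint_def replace_col_def b_def by auto
  qed
  also have "(\<Prod>k<n. b k) = b i * (\<Prod>k\<in>{..<n} - {i}. b k)" using i by (subst prod.remove[of _ i]) auto
  also have "(\<Prod>k\<in>{..<n} - {i}. b k) = ZZ ^ (n - 1)" unfolding b_def using i by simp
  also have "b i = ZZ ^ (2*n+2)" unfolding b_def by simp
  also have "fact n * (ZZ ^ (2*n+2) * ZZ ^ (n-1)) \<le> ZZ ^ n * (ZZ ^ (2*n+2) * ZZ ^ (n-1))"
    using fact_Z Z_ge by (intro mult_right_mono) auto
  also have "\<dots> = ZZ ^ (4*n+1)"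
  proof -
    have e: "n + (2*n+2 + (n-1)) = 4*n+1" using i by simp
    show ?thesis by (simp only: power_add[symmetric] e)
  qed
  also have "\<dots> \<le> ZZ ^ (4*n+2)" by (rule Z_pow_mono) simp
  finally show ?thesis by (simp add: of_int_hom.hom_det)
qed

lemma Z2: "2 \<le> ZZ" using Z_ge(4) n1 by linarith

lemma TT_mb: "\<bar>real_of_int TT\<bar> \<le> ZZ ^ (n+2) * Q ^ 0"
proof -
  have "\<bar>real_of_int TT\<bar> \<le> real n * B ^ (n+1)" using TT_bnd TT_pos by simp
  also have "\<dots> \<le> ZZ * ZZ ^ (n+1)" using Z_ge B1 by (intro mult_mono power_mono) auto
  finally show ?thesis by simp
qed

lemma u_mb: "j < n \<Longrightarrow> \<bar>real_of_int ((if i = j then TT else 0) - \<beta> j * Aex j)\<bar> \<le> ZZ ^ (n+2) * Q ^ 0"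
proof -
  assume j: "j < n"
  have "\<bar>real_of_int ((if i = j then TT else 0) - \<beta> j * Aex j)\<bar> \<le> 2 * real n * B ^ (n+1)" by (rule u_bnd[OF j])
  also have "\<dots> \<le> ZZ * ZZ ^ (n+1)" using Z_ge B1 by (intro mult_mono power_mono) auto
  finally show ?thesis by simp
qed

lemma qq_mb: "\<bar>real_of_int qq\<bar> \<le> ZZ ^ (7*n) * Q ^ 0"
proof -
  have "\<bar>real_of_int qq\<bar> = \<bar>real_of_int AA\<bar> * \<bar>real_of_int TT\<bar> * \<bar>real_of_int (det Nint)\<bar>"
    unfolding qq_def by (simp add: abs_mult)
  also have "\<dots> \<le> ZZ ^ n * ZZ ^ (n+2) * ZZ ^ (2*n)"
  proof (intro mult_mono)
    show "\<bar>real_of_int AA\<bar> \<le> ZZ ^ n" using AA_bnd AA_pos power_mono[OF Z_ge(1), of n] B1 by simp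
    show "\<bar>real_of_int TT\<bar> \<le> ZZ ^ (n+2)" using TT_mb by simp
  qed (use detN_bnd Z_ge in auto)
  also have "\<dots> = ZZ ^ (4*n+2)"
  proof -
    have e: "n + (n+2) + 2*n = 4*n+2" by simp
    show ?thesis by (simp only: power_add[symmetric] e)
  qed
  also have "\<dots> \<le> ZZ ^ (7*n)" using n1 by (intro Z_pow_mono) simp
  finally show ?thesis by simp
qed

lemma num_mb: assumes "i < n" "j < n" shows "\<bar>real_of_int (num i j)\<bar> \<le> ZZ ^ (7*n) * Q ^ 0"
proof -
  have "\<bar>real_of_int (num i j)\<bar> \<le> \<bar>real_of_int (\<alpha> i)\<bar> * \<bar>real_of_int (det (Mint j i))\<bar>"
    unfolding num_def by (auto simp: abs_mult sgn_if)
  also have "\<dots> \<le> ZZ * ZZ ^ (4*n+2)"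
    using aB[OF assms(1)] apos[OF assms(1)] Z_ge detM_bnd[OF assms] by (intro mult_mono) auto
  also have "\<dots> = ZZ ^ (4*n+3)"
  proof -
    have e: "4*n+3 = Suc (4*n+2)" by simp
    show ?thesis by (simp only: e power_Suc)
  qed
  also have "\<dots> \<le> ZZ ^ (7*n)" using n1 by (intro Z_pow_mono) simp
  finally show ?thesis by simp
qed


lemma stat_u: assumes "i < n" "j < n"
  shows "(if i = j then 1 else 0) - stat_dist n c j = of_int ((if i = j then TT else 0) - \<beta> j * Aex j) / of_int TT"
  using pi_eq[OF assms(2)] TT_pos unfolding pi_stat[symmetric] by (auto simp: field_simps)

lemma xrest_rep:
  fixes e f e' f' :: "nat \<Rightarrow> int" and XX VV :: "nat \<Rightarrow> nat \<Rightarrow> real"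
  assumes i: "i < n"
    and fpos: "\<And>j. j < n \<Longrightarrow> f j > 0" and fpos': "\<And>j. j < n \<Longrightarrow> f' j > 0"
    and X: "\<And>j. j < n \<Longrightarrow> XX j k = of_int (e j) / of_int (f j)"
    and Y: "\<And>j. j < n \<Longrightarrow> VV j k = of_int (e' j) / of_int (f' j)"
  shows "x_rest n c Gam XX VV i k =
    of_int ((\<Sum>j<n. ((if i = j then TT else 0) - \<beta> j * Aex j) * (e j * (\<Prod>l\<in>{..<n} - {j}. f l))) * qq * (\<Prod>j<n. f' j)
          + (\<Sum>j<n. num i j * (e' j * (\<Prod>l\<in>{..<n} - {j}. f' l))) * TT * (\<Prod>j<n. f j))
    / of_int (TT * (\<Prod>j<n. f j) * qq * (\<Prod>j<n. f' j))"
proof -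
  define S1 where "S1 = (\<Sum>j<n. ((if i = j then TT else 0) - \<beta> j * Aex j) * (e j * (\<Prod>l\<in>{..<n} - {j}. f l)))"
  define S2 where "S2 = (\<Sum>j<n. num i j * (e' j * (\<Prod>l\<in>{..<n} - {j}. f' l)))"
  define F where "F = (\<Prod>j<n. f j)"
  define G where "G = (\<Prod>j<n. f' j)"
  have Fp: "F > 0" unfolding F_def using fpos by (intro prod_pos) auto
  have Gp: "G > 0" unfolding G_def using fpos' by (intro prod_pos) auto
  have T1: "(\<Sum>j<n. ((if i = j then 1 else 0) - stat_dist n c j) * XX j k) = of_int S1 / (of_int TT * of_int F)"
  proof -
    have "(\<Sum>j<n. ((if i = j then 1 else 0) - stat_dist n c j) * XX j k) =
          (\<Sum>j<n. (of_int ((if i = j then TT else 0) - \<beta> j * Aex j) / of_int TT) * (of_int (e j) / of_int (f j)))"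
      using stat_u[OF i] X by (intro sum.cong refl) simp
    also have "\<dots> = (\<Sum>j<n. (of_int ((if i = j then TT else 0) - \<beta> j * Aex j) / of_int TT) * of_int (e j * (\<Prod>l\<in>{..<n} - {j}. f l))) / of_int F"
      unfolding F_def by (rule frac_sum[OF fpos])
    also have "(\<Sum>j<n. (of_int ((if i = j then TT else 0) - \<beta> j * Aex j) / (of_int TT :: real)) * of_int (e j * (\<Prod>l\<in>{..<n} - {j}. f l)))
        = of_int S1 / of_int TT"
    proof -
      have "(\<Sum>j<n. (of_int ((if i = j then TT else 0) - \<beta> j * Aex j) / (of_int TT :: real)) * of_int (e j * (\<Prod>l\<in>{..<n} - {j}. f l)))
          = (\<Sum>j<n. of_int (((if i = j then TT else 0) - \<beta> j * Aex j) * (e j * (\<Prod>l\<in>{..<n} - {j}. f l))) / of_int TT)"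
        by (intro sum.cong refl) (simp only: of_int_mult times_divide_eq_left)
      also have "\<dots> = of_int S1 / of_int TT" unfolding S1_def of_int_sum by (rule sum_divide_distrib[symmetric])
      finally show ?thesis .
    qed
    finally show ?thesis by simp
  qed
  have T2: "(\<Sum>j<n. Gam i j * VV j k) = of_int S2 / (of_int qq * of_int G)"
  proof -
    have "(\<Sum>j<n. Gam i j * VV j k) = (\<Sum>j<n. (of_int (num i j) / of_int qq) * (of_int (e' j) / of_int (f' j)))"
      using Gam_rep[OF i] Y by (intro sum.cong refl) simp
    also have "\<dots> = (\<Sum>j<n. (of_int (num i j) / of_int qq) * of_int (e' j * (\<Prod>l\<in>{..<n} - {j}. f' l))) / of_int G"
      unfolding G_def by (rule frac_sum[OF fpos'])
    also have "(\<Sum>j<n. (of_int (num i j) / (of_int qq :: real)) * of_int (e' j * (\<Prod>l\<in>{..<n} - {j}. f' l))) = of_int S2 / of_int qq"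
    proof -
      have "(\<Sum>j<n. (of_int (num i j) / (of_int qq :: real)) * of_int (e' j * (\<Prod>l\<in>{..<n} - {j}. f' l)))
          = (\<Sum>j<n. of_int (num i j * (e' j * (\<Prod>l\<in>{..<n} - {j}. f' l))) / of_int qq)"
        by (intro sum.cong refl) (simp only: of_int_mult times_divide_eq_left)
      also have "\<dots> = of_int S2 / of_int qq" unfolding S2_def of_int_sum by (rule sum_divide_distrib[symmetric])
      finally show ?thesis .
    qed
    finally show ?thesis by simp
  qed
  have "x_rest n c Gam XX VV i k = of_int S1 / (of_int TT * of_int F) + of_int S2 / (of_int qq * of_int G)"
    unfolding x_rest_def T1 T2 ..
  also have "\<dots> = of_int (S1 * qq * G + S2 * TT * F) / of_int (TT * F * qq * G)"
    using Fp Gp TT_pos qq_pos by (simp add: field_simps)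
  finally show ?thesis unfolding S1_def S2_def F_def G_def .
qed

lemma Q0: "\<bar>x\<bar> \<le> Q \<Longrightarrow> \<bar>x\<bar> \<le> ZZ ^ 0 * Q ^ 1" by simp
lemma ZQ: "1 \<le> ZZ" "1 \<le> Q" using Z_ge(3) Q1 by auto

lemma prodQ: assumes "\<And>j. j < n \<Longrightarrow> g j > 0 \<and> real_of_int (g j) \<le> Q"
  shows "\<bar>real_of_int (\<Prod>l\<in>{..<n} - {j}. g l)\<bar> \<le> ZZ ^ 0 * Q ^ n"
    "\<bar>real_of_int (\<Prod>l<n. g l)\<bar> \<le> ZZ ^ 0 * Q ^ n"
proof -
  have h: "\<And>l. l \<in> {..<n} - {j} \<Longrightarrow> 0 \<le> real_of_int (g l) \<and> real_of_int (g l) \<le> Q"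
    using assms by (force simp: less_imp_le)
  have c: "card ({..<n} - {j}) \<le> n" by (simp add: card_Diff_subset_Int)
  have "0 \<le> (\<Prod>l\<in>{..<n} - {j}. real_of_int (g l))" "(\<Prod>l\<in>{..<n} - {j}. real_of_int (g l)) \<le> Q ^ n"
    using mb_prod[where S="{..<n} - {j}" and n=n and g="\<lambda>l. real_of_int (g l)", OF Q1 _ c h] by auto
  thus "\<bar>real_of_int (\<Prod>l\<in>{..<n} - {j}. g l)\<bar> \<le> ZZ ^ 0 * Q ^ n" by simp
  have h2: "\<And>l. l \<in> {..<n} \<Longrightarrow> 0 \<le> real_of_int (g l) \<and> real_of_int (g l) \<le> Q"
    using assms by (force simp: less_imp_le)
  have "0 \<le> (\<Prod>l<n. real_of_int (g l))" "(\<Prod>l<n. real_of_int (g l)) \<le> Q ^ n"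
    using mb_prod[where S="{..<n}" and n=n and g="\<lambda>l. real_of_int (g l)", OF Q1 _ _ h2] by auto
  thus "\<bar>real_of_int (\<Prod>l<n. g l)\<bar> \<le> ZZ ^ 0 * Q ^ n" by simp
qed

lemma xrest_bnd:
  fixes e f e' f' :: "nat \<Rightarrow> int"
  assumes i: "i < n"
    and fb: "\<And>j. j < n \<Longrightarrow> f j > 0 \<and> real_of_int (f j) \<le> Q"
    and fb': "\<And>j. j < n \<Longrightarrow> f' j > 0 \<and> real_of_int (f' j) \<le> Q"
    and eb: "\<And>j. j < n \<Longrightarrow> \<bar>real_of_int (e j)\<bar> \<le> Q"
    and eb': "\<And>j. j < n \<Longrightarrow> \<bar>real_of_int (e' j)\<bar> \<le> Q"
  shows "\<bar>real_of_int ((\<Sum>j<n. ((if i = j then TT else 0) - \<beta> j * Aex j) * (e j * (\<Prod>l\<in>{..<n} - {j}. f l))) * qq * (\<Prod>j<n. f' j)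
          + (\<Sum>j<n. num i j * (e' j * (\<Prod>l\<in>{..<n} - {j}. f' l))) * TT * (\<Prod>j<n. f j))\<bar> \<le> ZZ ^ (20*n) * Q ^ (3*n)"
    "\<bar>real_of_int (TT * (\<Prod>j<n. f j) * qq * (\<Prod>j<n. f' j))\<bar> \<le> ZZ ^ (20*n) * Q ^ (3*n)"
proof -
  note Z = ZQ(1) and QQ = ZQ(2)
  have t1: "\<bar>real_of_int (((if i = j then TT else 0) - \<beta> j * Aex j) * (e j * (\<Prod>l\<in>{..<n} - {j}. f l)))\<bar>
      \<le> ZZ ^ (n+2+(0+0)) * Q ^ (0+(1+n))" if j: "j < n" for j
    unfolding of_int_mult
    by (rule mb_mult[OF Z QQ u_mb[OF j] mb_mult[OF Z QQ Q0[OF eb[OF j]] prodQ(1)[OF fb]]])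
  have S1: "\<bar>real_of_int (\<Sum>j<n. ((if i = j then TT else 0) - \<beta> j * Aex j) * (e j * (\<Prod>l\<in>{..<n} - {j}. f l)))\<bar>
      \<le> ZZ ^ (n+2+(0+0)+1) * Q ^ (0+(1+n))"
    unfolding of_int_sum by (rule mb_sum[OF QQ Z_ge(2) t1])
  have t2: "\<bar>real_of_int (num i j * (e' j * (\<Prod>l\<in>{..<n} - {j}. f' l)))\<bar>
      \<le> ZZ ^ (7*n+(0+0)) * Q ^ (0+(1+n))" if j: "j < n" for j
    unfolding of_int_mult
    by (rule mb_mult[OF Z QQ num_mb[OF i j] mb_mult[OF Z QQ Q0[OF eb'[OF j]] prodQ(1)[OF fb']]])
  have S2: "\<bar>real_of_int (\<Sum>j<n. num i j * (e' j * (\<Prod>l\<in>{..<n} - {j}. f' l)))\<bar>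
      \<le> ZZ ^ (7*n+(0+0)+1) * Q ^ (0+(1+n))"
    unfolding of_int_sum by (rule mb_sum[OF QQ Z_ge(2) t2])
  have A1: "\<bar>real_of_int ((\<Sum>j<n. ((if i = j then TT else 0) - \<beta> j * Aex j) * (e j * (\<Prod>l\<in>{..<n} - {j}. f l))) * qq * (\<Prod>j<n. f' j))\<bar>
      \<le> ZZ ^ (n+2+(0+0)+1+7*n+0) * Q ^ (0+(1+n)+0+n)"
    unfolding of_int_mult by (rule mb_mult[OF Z QQ mb_mult[OF Z QQ S1 qq_mb] prodQ(2)[OF fb']])
  have A2: "\<bar>real_of_int ((\<Sum>j<n. num i j * (e' j * (\<Prod>l\<in>{..<n} - {j}. f' l))) * TT * (\<Prod>j<n. f j))\<bar>
      \<le> ZZ ^ (7*n+(0+0)+1+(n+2)+0) * Q ^ (0+(1+n)+0+n)"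
    unfolding of_int_mult by (rule mb_mult[OF Z QQ mb_mult[OF Z QQ S2 TT_mb] prodQ(2)[OF fb]])
  have A1': "\<bar>real_of_int ((\<Sum>j<n. ((if i = j then TT else 0) - \<beta> j * Aex j) * (e j * (\<Prod>l\<in>{..<n} - {j}. f l))) * qq * (\<Prod>j<n. f' j))\<bar>
      \<le> ZZ ^ (8*n+3) * Q ^ (2*n+1)"
    by (rule mb_weak[OF Z QQ A1]) simp_all
  have A2': "\<bar>real_of_int ((\<Sum>j<n. num i j * (e' j * (\<Prod>l\<in>{..<n} - {j}. f' l))) * TT * (\<Prod>j<n. f j))\<bar>
      \<le> ZZ ^ (8*n+3) * Q ^ (2*n+1)"
    by (rule mb_weak[OF Z QQ A2]) simp_all
  have "\<bar>real_of_int ((\<Sum>j<n. ((if i = j then TT else 0) - \<beta> j * Aex j) * (e j * (\<Prod>l\<in>{..<n} - {j}. f l))) * qq * (\<Prod>j<n. f' j))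
        + real_of_int ((\<Sum>j<n. num i j * (e' j * (\<Prod>l\<in>{..<n} - {j}. f' l))) * TT * (\<Prod>j<n. f j))\<bar>
      \<le> ZZ ^ (8*n+3+1) * Q ^ (2*n+1)"
    by (rule mb_add[OF Z2 QQ A1' A2'])
  hence "\<bar>real_of_int ((\<Sum>j<n. ((if i = j then TT else 0) - \<beta> j * Aex j) * (e j * (\<Prod>l\<in>{..<n} - {j}. f l))) * qq * (\<Prod>j<n. f' j))
        + real_of_int ((\<Sum>j<n. num i j * (e' j * (\<Prod>l\<in>{..<n} - {j}. f' l))) * TT * (\<Prod>j<n. f j))\<bar>
      \<le> ZZ ^ (20*n) * Q ^ (3*n)"
    by (rule mb_weak[OF Z QQ]) (use n1 in simp_all)
  thus "\<bar>real_of_int ((\<Sum>j<n. ((if i = j then TT else 0) - \<beta> j * Aex j) * (e j * (\<Prod>l\<in>{..<n} - {j}. f l))) * qq * (\<Prod>j<n. f' j)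
          + (\<Sum>j<n. num i j * (e' j * (\<Prod>l\<in>{..<n} - {j}. f' l))) * TT * (\<Prod>j<n. f j))\<bar> \<le> ZZ ^ (20*n) * Q ^ (3*n)"
    by (simp only: of_int_add)
  have D: "\<bar>real_of_int (TT * (\<Prod>j<n. f j) * qq * (\<Prod>j<n. f' j))\<bar> \<le> ZZ ^ (n+2+0+7*n+0) * Q ^ (0+n+0+n)"
    unfolding of_int_mult
    by (rule mb_mult[OF Z QQ mb_mult[OF Z QQ mb_mult[OF Z QQ TT_mb prodQ(2)[OF fb]] qq_mb] prodQ(2)[OF fb']])
  show "\<bar>real_of_int (TT * (\<Prod>j<n. f j) * qq * (\<Prod>j<n. f' j))\<bar> \<le> ZZ ^ (20*n) * Q ^ (3*n)"
    by (rule mb_weak[OF Z QQ D]) (use n1 in simp_all)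
qed

end

lemma Zpow_powr:
  fixes c0 :: real and n m :: nat
  assumes "n \<ge> 2"
  shows "(2 * real n * 2 powr (c0 * log 2 (real n))) ^ m = 2 powr (real m * (1 + log 2 (real n) + c0 * log 2 (real n)))"
proof -
  have "2 * real n * 2 powr (c0 * log 2 (real n)) = 2 powr (1 + log 2 (real n) + c0 * log 2 (real n))"
    using assms by (simp add: powr_add)
  hence "(2 * real n * 2 powr (c0 * log 2 (real n))) ^ m = (2 powr (1 + log 2 (real n) + c0 * log 2 (real n))) powr real m"
    by (simp add: powr_realpow)
  also have "\<dots> = 2 powr (real m * (1 + log 2 (real n) + c0 * log 2 (real n)))"
    by (simp add: powr_powr mult.commute)
  finally show ?thesis .
qed

lemma bits_final:
  fixes c0 x :: real and n p :: nat
  assumes c0: "c0 > 0" and n: "n \<ge> 2"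
    and x: "x \<le> (2 * real n * 2 powr (c0 * log 2 (real n))) ^ (20*n) * (2 powr real p) ^ (3*n)"
  shows "x < 2 powr ((20 * (2 + c0) + 4) * (real n * log 2 (real n) + real p * real n))"
proof -
  define L where "L = log 2 (real n)"
  have L1: "1 \<le> L" unfolding L_def using n by simp
  have "(2 powr real p) ^ (3*n) = 2 powr (real (3*n) * real p)"
    by (simp add: powr_realpow[symmetric] powr_powr mult.commute)
  hence "x \<le> 2 powr (real (20*n) * (1 + L + c0 * L)) * 2 powr (real (3*n) * real p)"
    using x Zpow_powr[OF n, of c0 "20*n"] unfolding L_def by simp
  also have "\<dots> = 2 powr (real (20*n) * (1 + L + c0 * L) + real (3*n) * real p)"
    by (simp add: powr_add)
  also have "\<dots> < 2 powr ((20 * (2 + c0) + 4) * (real n * L + real p * real n))"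
  proof (rule powr_less_mono)
    have nL: "0 < real n * L" using n L1 by simp
    have "real (20*n) * (1 + L + c0 * L) \<le> real (20*n) * ((2 + c0) * L)"
      using L1 by (intro mult_left_mono) (auto simp: algebra_simps)
    also have "\<dots> = 20 * (2 + c0) * (real n * L)" by (simp add: algebra_simps)
    finally have a: "real (20*n) * (1 + L + c0 * L) \<le> 20 * (2 + c0) * (real n * L)" .
    have b: "real (3*n) * real p \<le> (20 * (2 + c0) + 4) * (real p * real n)"
    proof -
      have "real (3*n) * real p = 3 * (real p * real n)" by simp
      also have "\<dots> \<le> (20 * (2 + c0) + 4) * (real p * real n)"
        using c0 by (intro mult_right_mono) auto
      finally show ?thesis .
    qed
    have "20 * (2 + c0) * (real n * L) < (20 * (2 + c0) + 4) * (real n * L)"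
      using nL by (intro mult_strict_right_mono) auto
    with a b show "real (20*n) * (1 + L + c0 * L) + real (3*n) * real p < (20 * (2 + c0) + 4) * (real n * L + real p * real n)"
      by (simp add: distrib_left)
  qed simp
  finally show ?thesis unfolding L_def .
qed

lemma bits_gam:
  fixes c0 x :: real and n :: nat
  assumes c0: "c0 > 0" and n: "n \<ge> 2"
    and x: "x \<le> (2 * real n * 2 powr (c0 * log 2 (real n))) ^ (7*n) * 1"
  shows "x < 2 powr ((20 * (2 + c0) + 4) * (real n * log 2 (real n)))"
proof -
  define L where "L = log 2 (real n)"
  have L1: "1 \<le> L" unfolding L_def using n by simp
  have "x \<le> 2 powr (real (7*n) * (1 + L + c0 * L))"
    using x Zpow_powr[OF n, of c0 "7*n"] unfolding L_def by simp
  also have "\<dots> < 2 powr ((20 * (2 + c0) + 4) * (real n * L))"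
  proof (rule powr_less_mono)
    have nL: "0 < real n * L" using n L1 by simp
    have "real (7*n) * (1 + L + c0 * L) \<le> real (7*n) * ((2 + c0) * L)"
      using L1 by (intro mult_left_mono) (auto simp: algebra_simps)
    also have "\<dots> = 7 * (2 + c0) * (real n * L)" by (simp add: algebra_simps)
    also have "\<dots> < (20 * (2 + c0) + 4) * (real n * L)"
      using nL c0 by (intro mult_strict_right_mono) auto
    finally show "real (7*n) * (1 + L + c0 * L) < (20 * (2 + c0) + 4) * (real n * L)" .
  qed simp
  finally show ?thesis unfolding L_def .
qed

lemma choice_rat:
  fixes x :: "nat \<Rightarrow> real"
  assumes "\<forall>i<n. rat_over_bits (x i) b"
  obtains a q :: "nat \<Rightarrow> int" where
    "\<And>i. i < n \<Longrightarrow> q i > 0 \<and> fits_bits (a i) b \<and> fits_bits (q i) b \<and> x i = of_int (a i) / of_int (q i)"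
proof -
  have "\<forall>i. \<exists>aq::int\<times>int. i < n \<longrightarrow> snd aq > 0 \<and> fits_bits (fst aq) b \<and> fits_bits (snd aq) b \<and> x i = of_int (fst aq) / of_int (snd aq)"
    using assms unfolding rat_over_bits_def by fastforce
  from choice[OF this] obtain g where
    g: "\<forall>i. i < n \<longrightarrow> snd (g i) > 0 \<and> fits_bits (fst (g i)) b \<and> fits_bits (snd (g i)) b \<and> x i = of_int (fst (g i)) / of_int (snd (g i))"
    by blast
  show ?thesis by (rule that[of "\<lambda>i. snd (g i)" "\<lambda>i. fst (g i)"]) (use g in auto)
qed

theorem lemma3p12:
  fixes c0 :: real
  assumes "c0 > 0"
  shows "\<exists>K::real. \<forall>(n::nat) (E::nat \<Rightarrow> nat \<Rightarrow> bool) (c::nat \<Rightarrow> real) (d::nat) (p::nat)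
            (x0::nat \<Rightarrow> nat \<Rightarrow> real) (v1::nat \<Rightarrow> nat \<Rightarrow> real).
     n \<ge> 2 \<longrightarrow> undirected_graph n E \<longrightarrow> graph_connected n E \<longrightarrow>
     (\<forall>i<n. c i > 0 \<and> rat_over_bits (c i) (c0 * log 2 n) \<and> c i * real (degree n E i) < 1) \<longrightarrow>
     p \<ge> 1 \<longrightarrow>
     (\<forall>i<n. \<forall>k<d. rat_over_bits (x0 i k) p \<and> rat_over_bits (v1 i k) p) \<longrightarrow>
     (\<exists>\<Gamma>::nat \<Rightarrow> nat \<Rightarrow> real.
        (\<forall>i<n. \<forall>j<n. gamma_seq n E c i j \<longlonglongrightarrow> \<Gamma> i j) \<and>
        cd_rational_bits {\<Gamma> i j | i j. i < n \<and> j < n} (K * (n * log 2 n)) \<and>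
        (\<forall>k<d. cd_rational_bits {x_rest n c \<Gamma> x0 v1 i k | i. i < n}
                         (K * (n * log 2 n + p * n))))"
proof (rule exI[of _ "20 * (2 + c0) + 4"], intro allI impI)
  fix n :: nat and E :: "nat \<Rightarrow> nat \<Rightarrow> bool" and c :: "nat \<Rightarrow> real" and d p :: nat
    and x0 v1 :: "nat \<Rightarrow> nat \<Rightarrow> real"
  assume n2: "n \<ge> 2" and und: "undirected_graph n E" and conn: "graph_connected n E"
    and hc: "\<forall>i<n. c i > 0 \<and> rat_over_bits (c i) (c0 * log 2 n) \<and> c i * real (degree n E i) < 1"
    and p1: "p \<ge> 1"
    and hx: "\<forall>i<n. \<forall>k<d. rat_over_bits (x0 i k) p \<and> rat_over_bits (v1 i k) p"
  let ?K = "20 * (2 + c0) + 4"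
  have "\<forall>i<n. rat_over_bits (c i) (c0 * log 2 n)" using hc by blast
  then obtain \<alpha> \<beta> :: "nat \<Rightarrow> int" where
    ab: "\<And>i. i < n \<Longrightarrow> \<beta> i > 0 \<and> fits_bits (\<alpha> i) (c0 * log 2 n) \<and> fits_bits (\<beta> i) (c0 * log 2 n)
           \<and> c i = of_int (\<alpha> i) / of_int (\<beta> i)"
    by (rule choice_rat) blast
  define B where "B = 2 powr (c0 * log 2 (real n))"
  define Q where "Q = 2 powr real p"
  have apos: "\<alpha> i > 0" if "i < n" for i
  proof -
    have "0 < c i" using hc that by blast
    hence "0 < real_of_int (\<alpha> i) / real_of_int (\<beta> i)" using ab[OF that] by simp
    thus ?thesis using ab[OF that] by (simp add: zero_less_divide_iff)
  qed
  have FB: "flock_bnd n E c \<alpha> \<beta> B Q"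
  proof (unfold_locales)
    show "undirected_graph n E" by (rule und)
    show "graph_connected n E" by (rule conn)
    show "\<And>i. i < n \<Longrightarrow> 0 < c i" using hc by blast
    show "\<And>i. i < n \<Longrightarrow> c i * real (degree n E i) < 1" using hc by blast
    show "\<And>i. i < n \<Longrightarrow> 0 < \<alpha> i" by (rule apos)
    show "\<And>i. i < n \<Longrightarrow> 0 < \<beta> i" using ab by blast
    show "\<And>i. i < n \<Longrightarrow> c i = real_of_int (\<alpha> i) / real_of_int (\<beta> i)" using ab by blast
    show "0 < n" using n2 by simp
    show "1 \<le> Q" unfolding Q_def by (rule ge_one_powr_ge_zero) auto
    show "\<And>i. i < n \<Longrightarrow> real_of_int (\<alpha> i) \<le> B"
      using ab unfolding B_def fits_bits_def by (force simp: abs_less_iff)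
    show "\<And>i. i < n \<Longrightarrow> real_of_int (\<beta> i) \<le> B"
      using ab unfolding B_def fits_bits_def by (force simp: abs_less_iff)
  qed
  interpret F: flock_bnd n E c \<alpha> \<beta> B Q by (rule FB)
  have npos: "n > 0" using n2 by simp
  have ZZ_eq: "F.ZZ = 2 * real n * 2 powr (c0 * log 2 (real n))" using F.ZZ_def unfolding B_def by simp
  have fitsK: "fits_bits z (?K * (n * log 2 n))" if "\<bar>real_of_int z\<bar> \<le> F.ZZ ^ (7*n) * Q ^ 0" for z
    unfolding fits_bits_def
    using bits_gam[OF assms n2, of "\<bar>real_of_int z\<bar>"] that unfolding ZZ_eq by simp
  show "\<exists>\<Gamma>::nat \<Rightarrow> nat \<Rightarrow> real.
        (\<forall>i<n. \<forall>j<n. gamma_seq n E c i j \<longlonglongrightarrow> \<Gamma> i j) \<and>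
        cd_rational_bits {\<Gamma> i j | i j. i < n \<and> j < n} (?K * (n * log 2 n)) \<and>
        (\<forall>k<d. cd_rational_bits {x_rest n c \<Gamma> x0 v1 i k | i. i < n}
                         (?K * (n * log 2 n + p * n)))"
  proof (rule exI[of _ F.Gam], intro conjI allI impI)
    fix i j assume "i < n" "j < n"
    thus "gamma_seq n E c i j \<longlonglongrightarrow> F.Gam i j" by (rule F.gamma_conv[OF npos])
  next
    show "cd_rational_bits {F.Gam i j | i j. i < n \<and> j < n} (?K * (n * log 2 n))"
      unfolding cd_rational_bits_def
    proof (rule exI[of _ F.qq], intro conjI ballI)
      show "0 < F.qq" by (rule F.qq_pos)
      show "fits_bits F.qq (?K * (n * log 2 n))" by (rule fitsK[OF F.qq_mb])
      fix x assume "x \<in> {F.Gam i j | i j. i < n \<and> j < n}"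
      then obtain i j where ij: "i < n" "j < n" and x: "x = F.Gam i j" by blast
      show "\<exists>a. fits_bits a (?K * (n * log 2 n)) \<and> x = real_of_int a / real_of_int F.qq"
        by (rule exI[of _ "F.num i j"]) (use fitsK[OF F.num_mb[OF ij]] F.Gam_rep[OF ij] x in simp)
    qed
  next
    fix k assume k: "k < d"
    have "\<forall>j<n. rat_over_bits (x0 j k) p" using hx k by blast
    then obtain e f :: "nat \<Rightarrow> int" where
      ef: "\<And>j. j < n \<Longrightarrow> f j > 0 \<and> fits_bits (e j) p \<and> fits_bits (f j) p \<and> x0 j k = of_int (e j) / of_int (f j)"
      by (rule choice_rat) blast
    have "\<forall>j<n. rat_over_bits (v1 j k) p" using hx k by blast
    then obtain e' f' :: "nat \<Rightarrow> int" where
      ef': "\<And>j. j < n \<Longrightarrow> f' j > 0 \<and> fits_bits (e' j) p \<and> fits_bits (f' j) p \<and> v1 j k = of_int (e' j) / of_int (f' j)"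
      by (rule choice_rat) blast
    have QB: "\<And>z::int. fits_bits z p \<Longrightarrow> \<bar>real_of_int z\<bar> \<le> Q"
      unfolding fits_bits_def Q_def by simp
    have fb: "\<And>j. j < n \<Longrightarrow> f j > 0 \<and> real_of_int (f j) \<le> Q" using ef QB by (metis abs_of_pos of_int_0_less_iff)
    have fb': "\<And>j. j < n \<Longrightarrow> f' j > 0 \<and> real_of_int (f' j) \<le> Q" using ef' QB by (metis abs_of_pos of_int_0_less_iff)
    have eb: "\<And>j. j < n \<Longrightarrow> \<bar>real_of_int (e j)\<bar> \<le> Q" using ef QB by blast
    have eb': "\<And>j. j < n \<Longrightarrow> \<bar>real_of_int (e' j)\<bar> \<le> Q" using ef' QB by blast
    define Dd where "Dd = F.TT * (\<Prod>j<n. f j) * F.qq * (\<Prod>j<n. f' j)"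
    have Dpos: "Dd > 0" unfolding Dd_def using F.TT_pos F.qq_pos fb fb'
      by (intro mult_pos_pos prod_pos) auto
    have fitsK2: "fits_bits z (?K * (n * log 2 n + p * n))" if "\<bar>real_of_int z\<bar> \<le> F.ZZ ^ (20*n) * Q ^ (3*n)" for z
      unfolding fits_bits_def
      using bits_final[OF assms n2, of "\<bar>real_of_int z\<bar>" p] that unfolding ZZ_eq Q_def by simp
    show "cd_rational_bits {x_rest n c F.Gam x0 v1 i k | i. i < n} (?K * (n * log 2 n + p * n))"
      unfolding cd_rational_bits_def
    proof (rule exI[of _ Dd], intro conjI ballI)
      show "0 < Dd" by (rule Dpos)
      show "fits_bits Dd (?K * (n * log 2 n + p * n))"
        unfolding Dd_def by (rule fitsK2[OF F.xrest_bnd(2)[where e=e and f=f and e'=e' and f'=f', OF npos fb fb' eb eb']])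
      fix x assume "x \<in> {x_rest n c F.Gam x0 v1 i k | i. i < n}"
      then obtain i where i: "i < n" and x: "x = x_rest n c F.Gam x0 v1 i k" by blast
      show "\<exists>a. fits_bits a (?K * (n * log 2 n + p * n)) \<and> x = real_of_int a / real_of_int Dd"
      proof -
        have rep: "x_rest n c F.Gam x0 v1 i k =
          of_int ((\<Sum>j<n. ((if i = j then F.TT else 0) - \<beta> j * F.Aex j) * (e j * (\<Prod>l\<in>{..<n} - {j}. f l))) * F.qq * (\<Prod>j<n. f' j)
          + (\<Sum>j<n. F.num i j * (e' j * (\<Prod>l\<in>{..<n} - {j}. f' l))) * F.TT * (\<Prod>j<n. f j))
          / of_int Dd"
          unfolding Dd_def
          by (rule F.xrest_rep[where e=e and f=f and e'=e' and f'=f' and XX=x0 and VV=v1 and k=k, OF i])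
             (use ef ef' in auto)
        have bnd: "fits_bits ((\<Sum>j<n. ((if i = j then F.TT else 0) - \<beta> j * F.Aex j) * (e j * (\<Prod>l\<in>{..<n} - {j}. f l))) * F.qq * (\<Prod>j<n. f' j)
          + (\<Sum>j<n. F.num i j * (e' j * (\<Prod>l\<in>{..<n} - {j}. f' l))) * F.TT * (\<Prod>j<n. f j)) (?K * (n * log 2 n + p * n))"
          by (rule fitsK2[OF F.xrest_bnd(1)[where e=e and f=f and e'=e' and f'=f', OF i fb fb' eb eb']])
        show ?thesis using rep bnd x by blast
      qed
    qed
  qed
qed

end
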